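(* Assume (A2), (A3), (A4) and (A7). Then for the iterates of D-MSSCA, for all $T>1$ and $\alpha,\beta\in(0,1)$, $$\sum_{t=1}^T\phi^t\le\frac{\bar\sigma^2}{n^2b_0\beta}+\frac{2\beta\bar\sigma^2T}{n^2}+\frac{6L^2\alpha^2}{n^2\beta}\sum_{t=1}^{T-1}\mathbb{E}\|\delta^t\|^2+\frac{12L^2}{\beta n^2}\sum_{t=1}^T\mathbb{E}[(\theta^t)^2],$$ $$\sum_{t=1}^T\upsilon^t\le\frac{\bar\sigma^2}{b_0\beta}+2\beta\bar\sigma^2T+\frac{6L^2\alpha^2}{\beta}\sum_{t=1}^{T-1}\mathbb{E}\|\delta^t\|^2+\frac{12L^2}{\beta}\sum_{t=1}^T\mathbb{E}[(\theta^t)^2].$$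
   Context: Problem. Let $n,d\ge 1$. For $i\in\{1,\dots,n\}$ and each value of a random variable $\xi$, $f_i(\cdot,\xi):\mathbb{R}^d\to\mathbb{R}$ is differentiable (possibly non-convex); $u_i(x):=\mathbb{E}[f_i(x,\xi_i)]$ and $u(x):=\frac1n\sum_{i=1}^n u_i(x)$. The function $h:\mathbb{R}^d\to\mathbb{R}$ is convex (possibly non-smooth), $g:\mathbb{R}^d\to\mathbb{R}$ is convex, $\mathcal{X}:=\{x\in\mathbb{R}^d: g(x)\le 0\}$, and $\mathbb{1}_{\mathcal X}$ is its indicator function ($0$ on $\mathcal X$, $+\infty$ outside). Let $U:=u+h$ and $U^\star:=\min_{x\in\mathcal X}U(x)$. The $n$ agents communicate over a graph with vertex set $\{1,\dots,n\}$ and edge set $\mathcal E$ through a matrix $W\in\mathbb{R}^{n\times n}$; $\lambda_W:=\lambda_{\max}(W-\frac1n\mathbf 1_n\mathbf 1_n^\top)$. Algorithm D-MSSCA. Parameters: $\alpha,\beta\in(0,1)$, $\mu>0$, an initial batch size $b_0\in\mathbb N$. For each $i$, each $x'\in\mathbb{R}^d$ and each sample $\xi$, a surrogate $\hat f_i(\cdot,x',\xi):\mathbb{R}^d\to\mathbb{R}$ is used that is $\mu$-strongly convex and satisfies $\nabla_x\hat f_i(x',x',\xi)=\nabla f_i(x',\xi)$. Node $i$ draws samples $\xi_i^{1,1},\dots,\xi_i^{1,b_0}$ (with $\xi_i^1:=\xi_i^{1,1}$) and then $\xi_i^{t}$ for $t\ge2$. Initialization: $x_i^1=\bar x^1$ for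 all $i$, for a common point $\bar x^1\in\mathcal X$; $z_i^1=y_i^1=\frac1{b_0}\sum_{r=1}^{b_0}\nabla f_i(x_i^1,\xi_i^{1,r})$; $z_i^0:=0$ and $\nabla f_i(x_i^0,\xi_i^1):=0$. For $t\ge1$, each node $i$ computes $\tilde f_i(x):=\hat f_i(x,x_i^t,\xi_i^t)+(1-\beta)\langle z_i^{t-1}-\nabla f_i(x_i^{t-1},\xi_i^t),x-x_i^t\rangle$, $\hat x_i^t:=\arg\min_{x\in\mathcal X}\ \tilde f_i(x)+\langle y_i^t-z_i^t,x-x_i^t\rangle+h(x)$, $x_i^{t+1}:=\sum_{j=1}^nW_{ij}\big(x_j^t+\alpha(\hat x_j^t-x_j^t)\big)$, $z_i^{t+1}:=\nabla f_i(x_i^{t+1},\xi_i^{t+1})+(1-\beta)\big(z_i^t-\nabla f_i(x_i^t,\xi_i^{t+1})\big)$, $y_i^{t+1}:=\sum_{j=1}^nW_{ij}\big(y_j^t+z_j^{t+1}-z_j^t\big)$. Notation. $x^t,y^t,z^t,\hat x^t\in\mathbb{R}^{nd}$ are the stacked vectors $[x_1^t;\dots;x_n^t]$ etc.; $\bar x^t=\frac1n\sum_ix_i^t$, and similarly $\bar y^t,\bar z^t$. $\nabla\mathbf u(x^t):=[\nabla u_1(x_1^t);\dots;\nabla u_n(x_n^t)]$ and $\overline{\nabla u}(x^t):=\frac1n\sum_i\nabla u_i(x_i^t)$. Define $\theta^t:=\|x^t-(\mathbf 1_n\otimes I_d)\bar x^t\|$, $\delta^t:=\hat x^t-x^t$,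 $\phi^t:=\mathbb{E}\|\bar z^t-\overline{\nabla u}(x^t)\|^2$, $\upsilon^t:=\mathbb{E}\|z^t-\nabla\mathbf u(x^t)\|^2$, $\varepsilon^t:=\mathbb{E}\|y^t-(\mathbf 1_n\otimes I_d)\bar y^t\|^2$. Norms are Euclidean. Assumptions. (A1) $\inf_{x}U(x)>-\infty$. (A2) With $\mathcal H^t$ the history generated by $\{\xi_i^\tau\}_{i\le n,\tau\le t-1}$, $\mathbb{E}[\nabla f_i(x^t,\xi_i^t)\mid\mathcal H^t]=\nabla u_i(x^t)$. (A3) $\mathbb{E}\|\nabla f_i(x,\xi_i^t)-\nabla u_i(x)\|^2\le\sigma_i^2$ for all $x$; $\bar\sigma^2:=\sum_i\sigma_i^2$. (A4) $\mathbb{E}\|\nabla f_i(x,\xi)-\nabla f_i(y,\xi)\|^2\le L^2\|x-y\|^2$ for all $x,y$. (A7) The graph is undirected and connected, $W$ is doubly stochastic, $W_{ii}>0$ for all $i$, and for $i\ne j$, $W_{ij}>0$ if $(i,j)\in\mathcal E$ and $W_{ij}=0$ otherwise. *)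

theory Defs
  imports "HOL-Probability.Probability"
begin

definition strongly_convex :: "real \<Rightarrow> ('d::real_inner \<Rightarrow> real) \<Rightarrow> bool" where
  "strongly_convex \<mu> F \<longleftrightarrow> convex_on UNIV (\<lambda>x. F x - (\<mu> / 2) * (norm x)\<^sup>2)"

text \<open>Euclidean norm of a stacked vector [v_0; ...; v_(n-1)] in R^(nd).\<close>
definition stk_norm :: "nat \<Rightarrow> (nat \<Rightarrow> 'd::real_normed_vector) \<Rightarrow> real" where
  "stk_norm n v = sqrt (\<Sum>i<n. (norm (v i))\<^sup>2)"

definition avg :: "nat \<Rightarrow> (nat \<Rightarrow> 'd::real_vector) \<Rightarrow> 'd" where
  "avg n v = (1 / real n) *\<^sub>R (\<Sum>i<n. v i)"

text \<open>Index set of the drawn samples: sample (i,t,r) is the r-th sample of node i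
  at time t; at t = 1 there are b0 samples r = 1..b0, for t >= 2 only r = 1.
  Nodes are indexed 0..n-1.\<close>
definition sample_idx :: "nat \<Rightarrow> nat \<Rightarrow> (nat \<times> nat \<times> nat) set" where
  "sample_idx n b0 = {(i, t, r). i < n \<and> ((t = 1 \<and> 1 \<le> r \<and> r \<le> b0) \<or> (2 \<le> t \<and> r = 1))}"

definition hist :: "'a measure \<Rightarrow> 's measure \<Rightarrow> nat \<Rightarrow> nat \<Rightarrow> (nat \<Rightarrow> nat \<Rightarrow> nat \<Rightarrow> 'a \<Rightarrow> 's)
    \<Rightarrow> nat \<Rightarrow> 'a measure" where
  "hist M S n b0 \<xi> t = sigma (space M)
     {\<xi> i \<tau> r -` A \<inter> space M | i \<tau> r A. (i, \<tau>, r) \<in> sample_idx n b0 \<and> \<tau> \<le> t \<and> A \<in> sets S}"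

end

theory Submission
  imports Defs
begin


lemma indep_fubini:
  fixes H :: "'a \<Rightarrow> 's \<Rightarrow> ennreal"
  assumes P: "prob_space M"
    and sub: "subalgebra M F"
    and X: "X \<in> measurable M S"
    and ind: "\<And>A B. A \<in> sets F \<Longrightarrow> B \<in> sets S \<Longrightarrow>
        emeasure M (A \<inter> (X -` B \<inter> space M)) = emeasure M A * emeasure M (X -` B \<inter> space M)"
    and H: "case_prod H \<in> borel_measurable (F \<Otimes>\<^sub>M S)"
  shows "(\<integral>\<^sup>+\<omega>. H \<omega> (X \<omega>) \<partial>M) = (\<integral>\<^sup>+\<omega>. (\<integral>\<^sup>+s. H \<omega> s \<partial>distr M S X) \<partial>M)"
proof -
  interpret M: prob_space M by fact
  define R where "R = restr_to_subalg M F"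
  have sR: "sets R = sets F" unfolding R_def by (rule sets_restr_to_subalg[OF sub])
  have spR: "space R = space M" unfolding R_def by (rule space_restr_to_subalg)
  interpret R: prob_space R unfolding R_def by (rule prob_space_restr_to_subalg[OF sub P])
  interpret Q: prob_space "distr M S X" by (rule M.prob_space_distr[OF X])
  have sFM: "sets F \<subseteq> sets M" using sub by (simp add: subalgebra_def)
  have idm: "(\<lambda>\<omega>. \<omega>) \<in> measurable M R"
    unfolding measurable_def using sR spR sFM
    by (auto simp: sets.Int_space_eq2 subsetD)
  have pm: "(\<lambda>\<omega>. (\<omega>, X \<omega>)) \<in> measurable M (R \<Otimes>\<^sub>M S)"
    using idm X by measurable
  have eq: "R \<Otimes>\<^sub>M distr M S X = distr M (R \<Otimes>\<^sub>M S) (\<lambda>\<omega>. (\<omega>, X \<omega>))"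
  proof (rule pair_measure_eqI)
    show "sigma_finite_measure R" by unfold_locales
    show "sigma_finite_measure (distr M S X)" by unfold_locales
    show "sets (R \<Otimes>\<^sub>M distr M S X) = sets (distr M (R \<Otimes>\<^sub>M S) (\<lambda>\<omega>. (\<omega>, X \<omega>)))"
      by simp
  next
    fix A B assume A: "A \<in> sets R" and B: "B \<in> sets (distr M S X)"
    have AM: "A \<subseteq> space M" using A spR sets.sets_into_space by metis
    have "(\<lambda>\<omega>. (\<omega>, X \<omega>)) -` (A \<times> B) \<inter> space M = A \<inter> (X -` B \<inter> space M)"
      using AM by auto
    moreover have "emeasure R A = emeasure M A"
      unfolding R_def using A sR by (simp add: emeasure_restr_to_subalg[OF sub])
    ultimately show "emeasure R A * emeasure (distr M S X) B = emeasure (distr M (R \<Otimes>\<^sub>M S) (\<lambda>\<omega>. (\<omega>, X \<omega>))) (A \<times> B)"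
      using A B sR ind[of A B] X pm by (simp add: emeasure_distr)
  qed
  have HR: "case_prod H \<in> borel_measurable (R \<Otimes>\<^sub>M S)"
    using H by (simp add: measurable_cong_sets[OF sets_pair_measure_cong[OF sR refl] refl])
  have HR': "case_prod H \<in> borel_measurable (R \<Otimes>\<^sub>M distr M S X)"
    using HR by (simp add: measurable_cong_sets[OF sets_pair_measure_cong[OF refl sets_distr] refl])
  have "(\<integral>\<^sup>+\<omega>. H \<omega> (X \<omega>) \<partial>M) = (\<integral>\<^sup>+p. case_prod H p \<partial>distr M (R \<Otimes>\<^sub>M S) (\<lambda>\<omega>. (\<omega>, X \<omega>)))"
    using HR pm by (simp add: nn_integral_distr)
  also have "\<dots> = (\<integral>\<^sup>+p. case_prod H p \<partial>(R \<Otimes>\<^sub>M distr M S X))" by (simp add: eq)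
  also have "\<dots> = (\<integral>\<^sup>+\<omega>. (\<integral>\<^sup>+s. H \<omega> s \<partial>distr M S X) \<partial>R)"
    using Q.nn_integral_fst[OF HR'] by simp
  also have "\<dots> = (\<integral>\<^sup>+\<omega>. (\<integral>\<^sup>+s. H \<omega> s \<partial>distr M S X) \<partial>M)"
    unfolding R_def
  proof (rule nn_integral_subalgebra2[OF sub])
    have "case_prod H \<in> borel_measurable (F \<Otimes>\<^sub>M distr M S X)"
      using H by (simp add: measurable_cong_sets[OF sets_pair_measure_cong[OF refl sets_distr] refl])
    then show "(\<lambda>\<omega>. \<integral>\<^sup>+s. H \<omega> s \<partial>distr M S X) \<in> borel_measurable F"
      by (rule Q.borel_measurable_nn_integral)
  qed
  finally show ?thesis .
qed

lemma sq_mean_zero: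
  fixes w :: "'s \<Rightarrow> 'd::euclidean_space"
  assumes Q: "prob_space Q" and wi: "integrable Q w" and w0: "(\<integral>s. w s \<partial>Q) = 0"
  shows "(\<integral>\<^sup>+s. ennreal ((norm (u + w s))\<^sup>2) \<partial>Q) = ennreal ((norm u)\<^sup>2) + (\<integral>\<^sup>+s. ennreal ((norm (w s))\<^sup>2) \<partial>Q)"
proof -
  interpret Q: prob_space Q by fact
  have wm: "w \<in> borel_measurable Q" using wi by auto
  have pw: "(norm (w s))\<^sup>2 \<le> 2 * (norm (u + w s))\<^sup>2 + 2 * (norm u)\<^sup>2" for s
  proof -
    have "norm (w s) \<le> norm (u + w s) + norm u" by (metis add_diff_cancel_left' norm_triangle_ineq4)
    then have "(norm (w s))\<^sup>2 \<le> (norm (u + w s) + norm u)\<^sup>2" by (simp add: power_mono)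
    also have "\<dots> \<le> 2 * (norm (u + w s))\<^sup>2 + 2 * (norm u)\<^sup>2"
      by (smt (verit) sum_squares_ge_zero power2_sum sum_power2_ge_zero zero_le_power2 power2_diff)
    finally show ?thesis .
  qed
  show ?thesis
  proof (cases "(\<integral>\<^sup>+s. ennreal ((norm (w s))\<^sup>2) \<partial>Q) = \<infinity>")
    case True
    have "(\<integral>\<^sup>+s. ennreal ((norm (w s))\<^sup>2) \<partial>Q) \<le> (\<integral>\<^sup>+s. ennreal 2 * ennreal ((norm (u + w s))\<^sup>2) + ennreal (2 * (norm u)\<^sup>2) \<partial>Q)"
      by (intro nn_integral_mono) (metis pw ennreal_leI ennreal_mult'' ennreal_plus zero_le_power2 mult_nonneg_nonneg zero_le_numeral)
    also have "\<dots> = ennreal 2 * (\<integral>\<^sup>+s. ennreal ((norm (u + w s))\<^sup>2) \<partial>Q) + ennreal (2 * (norm u)\<^sup>2)"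
      using wm by (simp add: nn_integral_add nn_integral_cmult Q.emeasure_space_1)
    finally have "(\<integral>\<^sup>+s. ennreal ((norm (u + w s))\<^sup>2) \<partial>Q) = \<infinity>"
      using True by (auto simp: ennreal_mult_eq_top_iff top_unique)
    then show ?thesis using True by simp
  next
    case False
    have i2: "integrable Q (\<lambda>s. (norm (w s))\<^sup>2)"
      using False wm by (intro integrableI_nn_integral_finite[where x="enn2real (\<integral>\<^sup>+s. ennreal ((norm (w s))\<^sup>2) \<partial>Q)"]) 
        (auto simp: less_top)
    have i1: "integrable Q (\<lambda>s. inner u (w s))" using wi by (rule integrable_inner_right)
    have eqp: "(norm (u + w s))\<^sup>2 = (norm u)\<^sup>2 + 2 * inner u (w s) + (norm (w s))\<^sup>2" for s
      by (simp add: power2_norm_eq_inner inner_add_left inner_add_right inner_commute)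
    have i3: "integrable Q (\<lambda>s. (norm (u + w s))\<^sup>2)"
      unfolding eqp using i1 i2 by auto
    have "(\<integral>s. inner u (w s) \<partial>Q) = inner u (\<integral>s. w s \<partial>Q)" using wi by simp
    then have ii: "(\<integral>s. inner u (w s) \<partial>Q) = 0" using w0 by simp
    have "(\<integral>\<^sup>+s. ennreal ((norm (u + w s))\<^sup>2) \<partial>Q) = ennreal (\<integral>s. (norm (u + w s))\<^sup>2 \<partial>Q)"
      using i3 by (simp add: nn_integral_eq_integral)
    also have "(\<integral>s. (norm (u + w s))\<^sup>2 \<partial>Q) = (norm u)\<^sup>2 + (\<integral>s. (norm (w s))\<^sup>2 \<partial>Q)"
      unfolding eqp using i1 i2 ii by (simp add: Q.prob_space)
    also have "ennreal \<dots> = ennreal ((norm u)\<^sup>2) + ennreal (\<integral>s. (norm (w s))\<^sup>2 \<partial>Q)"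
      by (simp add: ennreal_plus)
    also have "ennreal (\<integral>s. (norm (w s))\<^sup>2 \<partial>Q) = (\<integral>\<^sup>+s. ennreal ((norm (w s))\<^sup>2) \<partial>Q)"
      using i2 by (simp add: nn_integral_eq_integral)
    finally show ?thesis .
  qed
qed


lemma nsq_meas: "(\<lambda>v::'d::euclidean_space. ennreal ((norm v)\<^sup>2)) \<in> borel_measurable borel"
  by measurable

lemma indep_quad:
  fixes U :: "'a \<Rightarrow> 'd::euclidean_space" and w :: "'a \<Rightarrow> 's \<Rightarrow> 'd"
  assumes P: "prob_space M"
    and sub: "subalgebra M F"
    and X: "X \<in> measurable M S"
    and ind: "\<And>A B. A \<in> sets F \<Longrightarrow> B \<in> sets S \<Longrightarrow>
        emeasure M (A \<inter> (X -` B \<inter> space M)) = emeasure M A * emeasure M (X -` B \<inter> space M)"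
    and U: "U \<in> borel_measurable F"
    and w: "case_prod w \<in> borel_measurable (F \<Otimes>\<^sub>M S)"
    and wi: "\<And>\<omega>. \<omega> \<in> space M \<Longrightarrow> integrable (distr M S X) (w \<omega>) \<and> (\<integral>s. w \<omega> s \<partial>distr M S X) = 0"
  shows "(\<integral>\<^sup>+\<omega>. ennreal ((norm (U \<omega> + w \<omega> (X \<omega>)))\<^sup>2) \<partial>M)
       = (\<integral>\<^sup>+\<omega>. ennreal ((norm (U \<omega>))\<^sup>2) \<partial>M) + (\<integral>\<^sup>+\<omega>. (\<integral>\<^sup>+s. ennreal ((norm (w \<omega> s))\<^sup>2) \<partial>distr M S X) \<partial>M)"
proof -
  interpret M: prob_space M by fact
  interpret Q: prob_space "distr M S X" by (rule M.prob_space_distr[OF X])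
  have H: "(\<lambda>(\<omega>, s). ennreal ((norm (U \<omega> + w \<omega> s))\<^sup>2)) \<in> borel_measurable (F \<Otimes>\<^sub>M S)"
  proof -
    have "(\<lambda>p. U (fst p) + case_prod w p) \<in> borel_measurable (F \<Otimes>\<^sub>M S)"
      using measurable_compose[OF measurable_fst U] w by (rule borel_measurable_add)
    then have "(\<lambda>p. ennreal ((norm (U (fst p) + case_prod w p))\<^sup>2)) \<in> borel_measurable (F \<Otimes>\<^sub>M S)"
      by (rule measurable_compose[OF _ nsq_meas])
    then show ?thesis by (simp add: case_prod_beta')
  qed
  have "(\<integral>\<^sup>+\<omega>. ennreal ((norm (U \<omega> + w \<omega> (X \<omega>)))\<^sup>2) \<partial>M)
      = (\<integral>\<^sup>+\<omega>. (\<integral>\<^sup>+s. ennreal ((norm (U \<omega> + w \<omega> s))\<^sup>2) \<partial>distr M S X) \<partial>M)"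
    by (rule indep_fubini[OF P sub X ind H])
  also have "\<dots> = (\<integral>\<^sup>+\<omega>. ennreal ((norm (U \<omega>))\<^sup>2) + (\<integral>\<^sup>+s. ennreal ((norm (w \<omega> s))\<^sup>2) \<partial>distr M S X) \<partial>M)"
    proof (rule nn_integral_cong)
    fix \<omega> assume "\<omega> \<in> space M"
    then have "integrable (distr M S X) (w \<omega>)" "(\<integral>s. w \<omega> s \<partial>distr M S X) = 0" using wi by auto
    from sq_mean_zero[OF Q.prob_space_axioms this, of "U \<omega>"]
    show "(\<integral>\<^sup>+s. ennreal ((norm (U \<omega> + w \<omega> s))\<^sup>2) \<partial>distr M S X) = ennreal ((norm (U \<omega>))\<^sup>2) + (\<integral>\<^sup>+s. ennreal ((norm (w \<omega> s))\<^sup>2) \<partial>distr M S X)" .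
  qed
  also have "\<dots> = (\<integral>\<^sup>+\<omega>. ennreal ((norm (U \<omega>))\<^sup>2) \<partial>M) + (\<integral>\<^sup>+\<omega>. (\<integral>\<^sup>+s. ennreal ((norm (w \<omega> s))\<^sup>2) \<partial>distr M S X) \<partial>M)"
  proof (rule nn_integral_add)
    show "(\<lambda>\<omega>. ennreal ((norm (U \<omega>))\<^sup>2)) \<in> borel_measurable M"
      using measurable_compose[OF measurable_from_subalg[OF sub U] nsq_meas] .
    have "case_prod w \<in> borel_measurable (F \<Otimes>\<^sub>M distr M S X)"
      using w by (simp add: measurable_cong_sets[OF sets_pair_measure_cong[OF refl sets_distr] refl])
    from measurable_compose[OF this nsq_meas]
    have "(\<lambda>(\<omega>, s). ennreal ((norm (w \<omega> s))\<^sup>2)) \<in> borel_measurable (F \<Otimes>\<^sub>M distr M S X)"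
      by (simp add: case_prod_beta')
    then have "(\<lambda>\<omega>. \<integral>\<^sup>+s. ennreal ((norm (w \<omega> s))\<^sup>2) \<partial>distr M S X) \<in> borel_measurable F"
      by (rule Q.borel_measurable_nn_integral)
    then show "(\<lambda>\<omega>. \<integral>\<^sup>+s. ennreal ((norm (w \<omega> s))\<^sup>2) \<partial>distr M S X) \<in> borel_measurable M"
      by (rule measurable_from_subalg[OF sub])
  qed
  finally show ?thesis .
qed



lemma sq3: fixes a b c :: "'d::real_inner"
  shows "(norm (a - b + c))\<^sup>2 \<le> 3 * (norm a)\<^sup>2 + 3 * (norm b)\<^sup>2 + 3 * (norm c)\<^sup>2"
proof -
  have "norm (a - b + c) \<le> norm a + norm b + norm c"
    by (metis norm_triangle_ineq norm_triangle_ineq4 add_right_mono order_trans)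
  then have "(norm (a - b + c))\<^sup>2 \<le> (norm a + norm b + norm c)\<^sup>2" by (simp add: power_mono)
  also have "\<dots> \<le> 3 * (norm a)\<^sup>2 + 3 * (norm b)\<^sup>2 + 3 * (norm c)\<^sup>2"
    by (smt (verit, best) power2_diff power2_sum zero_le_power2)
  finally show ?thesis .
qed

lemma sq2: fixes a b :: "'d::real_inner"
  shows "(norm (a + b))\<^sup>2 \<le> 2 * (norm a)\<^sup>2 + 2 * (norm b)\<^sup>2"
proof -
  have "norm (a + b) \<le> norm a + norm b" by (rule norm_triangle_ineq)
  then have "(norm (a + b))\<^sup>2 \<le> (norm a + norm b)\<^sup>2" by (simp add: power_mono)
  also have "\<dots> \<le> 2 * (norm a)\<^sup>2 + 2 * (norm b)\<^sup>2"
    by (smt (verit, best) power2_diff power2_sum zero_le_power2)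
  finally show ?thesis .
qed

lemma W_row_bound:
  fixes v :: "nat \<Rightarrow> 'd::real_inner"
  assumes nn: "\<And>j. j<n \<Longrightarrow> a j \<ge> 0" and s1: "(\<Sum>j<n. a j) = 1"
  shows "(norm (\<Sum>j<n. a j *\<^sub>R v j))\<^sup>2 \<le> (\<Sum>j<n. a j * (norm (v j))\<^sup>2)"
proof -
  have "norm (\<Sum>j<n. a j *\<^sub>R v j) \<le> (\<Sum>j<n. norm (a j *\<^sub>R v j))" by (rule norm_sum)
  also have "\<dots> = (\<Sum>j<n. a j * norm (v j))" using nn by (intro sum.cong) auto
  finally have "(norm (\<Sum>j<n. a j *\<^sub>R v j))\<^sup>2 \<le> (\<Sum>j<n. a j * norm (v j))\<^sup>2" by (simp add: power_mono)
  also have "(\<Sum>j<n. a j * norm (v j)) = (\<Sum>j<n. sqrt (a j) * (sqrt (a j) * norm (v j)))"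
    using nn by (intro sum.cong) (auto simp: mult.assoc[symmetric])
  also have "(\<dots>)\<^sup>2 \<le> (\<Sum>j<n. (sqrt (a j))\<^sup>2) * (\<Sum>j<n. (sqrt (a j) * norm (v j))\<^sup>2)"
    by (rule Cauchy_Schwarz_ineq_sum)
  also have "\<dots> = (\<Sum>j<n. a j * (norm (v j))\<^sup>2)"
    using nn s1 by (simp add: power_mult_distrib)
  finally show ?thesis .
qed

lemma W_contract:
  fixes v :: "nat \<Rightarrow> 'd::real_inner"
  assumes nn: "\<And>i j. i<n \<Longrightarrow> j<n \<Longrightarrow> W i j \<ge> 0" and row: "\<And>i. i<n \<Longrightarrow> (\<Sum>j<n. W i j) = 1"
    and col: "\<And>j. j<n \<Longrightarrow> (\<Sum>i<n. W i j) = 1"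
  shows "(\<Sum>i<n. (norm (\<Sum>j<n. W i j *\<^sub>R v j))\<^sup>2) \<le> (\<Sum>j<n. (norm (v j))\<^sup>2)"
proof -
  have "(\<Sum>i<n. (norm (\<Sum>j<n. W i j *\<^sub>R v j))\<^sup>2) \<le> (\<Sum>i<n. \<Sum>j<n. W i j * (norm (v j))\<^sup>2)"
    by (intro sum_mono W_row_bound) (use nn row in auto)
  also have "\<dots> = (\<Sum>j<n. (\<Sum>i<n. W i j) * (norm (v j))\<^sup>2)"
    by (subst sum.swap) (simp add: sum_distrib_right)
  also have "\<dots> = (\<Sum>j<n. (norm (v j))\<^sup>2)" using col by simp
  finally show ?thesis .
qed

lemma dx_bound:
  fixes x xh x' :: "nat \<Rightarrow> 'd::real_inner"
  assumes nn: "\<And>i j. i<n \<Longrightarrow> j<n \<Longrightarrow> W i j \<ge> 0" and row: "\<And>i. i<n \<Longrightarrow> (\<Sum>j<n. W i j) = 1"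
    and col: "\<And>j. j<n \<Longrightarrow> (\<Sum>i<n. W i j) = 1"
    and upd: "\<And>i. i<n \<Longrightarrow> x' i = (\<Sum>j<n. W i j *\<^sub>R (x j + \<alpha> *\<^sub>R (xh j - x j)))"
  shows "(\<Sum>i<n. (norm (x' i - x i))\<^sup>2) \<le> 3 * \<alpha>\<^sup>2 * (\<Sum>i<n. (norm (xh i - x i))\<^sup>2)
            + 6 * (\<Sum>i<n. (norm (x i - avg n x))\<^sup>2)"
proof -
  define xb where "xb = avg n x"
  define y where "y j = x j - xb" for j
  define d where "d j = xh j - x j" for j
  have eq: "x' i - x i = (\<Sum>j<n. W i j *\<^sub>R y j) - y i + \<alpha> *\<^sub>R (\<Sum>j<n. W i j *\<^sub>R d j)" if "i < n" for i
  proof -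
    have "(\<Sum>j<n. W i j *\<^sub>R (x j + \<alpha> *\<^sub>R (xh j - x j)))
        = (\<Sum>j<n. W i j *\<^sub>R y j) + (\<Sum>j<n. W i j) *\<^sub>R xb + \<alpha> *\<^sub>R (\<Sum>j<n. W i j *\<^sub>R d j)"
      by (simp add: y_def d_def scaleR_add_right scaleR_diff_right sum.distrib sum_subtractf
          scaleR_sum_right scaleR_sum_left algebra_simps)
    then show ?thesis using upd[OF that] row[OF that] by (simp add: y_def)
  qed
  have "(\<Sum>i<n. (norm (x' i - x i))\<^sup>2) \<le> (\<Sum>i<n. 3 * (norm (\<Sum>j<n. W i j *\<^sub>R y j))\<^sup>2 + 3 * (norm (y i))\<^sup>2
          + 3 * (norm (\<alpha> *\<^sub>R (\<Sum>j<n. W i j *\<^sub>R d j)))\<^sup>2)"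
  proof (intro sum_mono)
    fix i assume "i \<in> {..<n}"
    then have e: "x' i - x i = (\<Sum>j<n. W i j *\<^sub>R y j) - y i + \<alpha> *\<^sub>R (\<Sum>j<n. W i j *\<^sub>R d j)"
      using eq by simp
    show "(norm (x' i - x i))\<^sup>2 \<le> 3 * (norm (\<Sum>j<n. W i j *\<^sub>R y j))\<^sup>2 + 3 * (norm (y i))\<^sup>2
          + 3 * (norm (\<alpha> *\<^sub>R (\<Sum>j<n. W i j *\<^sub>R d j)))\<^sup>2"
      unfolding e by (rule sq3)
  qed
  also have "\<dots> = 3 * (\<Sum>i<n. (norm (\<Sum>j<n. W i j *\<^sub>R y j))\<^sup>2) + 3 * (\<Sum>i<n. (norm (y i))\<^sup>2)
          + 3 * \<alpha>\<^sup>2 * (\<Sum>i<n. (norm (\<Sum>j<n. W i j *\<^sub>R d j))\<^sup>2)"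
    by (simp add: sum.distrib sum_distrib_left power_mult_distrib mult.assoc)
  also have "\<dots> \<le> 3 * (\<Sum>i<n. (norm (y i))\<^sup>2) + 3 * (\<Sum>i<n. (norm (y i))\<^sup>2)
          + 3 * \<alpha>\<^sup>2 * (\<Sum>i<n. (norm (d i))\<^sup>2)"
    using W_contract[OF nn row col, of y] W_contract[OF nn row col, of d]
    by (intro add_mono mult_left_mono) auto
  finally show ?thesis by (simp add: y_def d_def xb_def)
qed



lemma noise_mean:
  fixes G :: "'d \<Rightarrow> 's \<Rightarrow> 'd::euclidean_space" and g :: "'d \<Rightarrow> 'd"
  assumes int: "\<And>v. integrable Q (G v) \<and> (\<integral>s. G v s \<partial>Q) = g v" and Q: "prob_space Q"
  shows "integrable Q (\<lambda>s. (G v' s - g v') - c *\<^sub>R (G v s - g v))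
      \<and> (\<integral>s. (G v' s - g v') - c *\<^sub>R (G v s - g v) \<partial>Q) = 0"
proof -
  interpret Q: prob_space Q by fact
  have i1: "integrable Q (G v')" and i2: "integrable Q (G v)" using int by auto
  have e1: "integral\<^sup>L Q (G v') = g v'" and e2: "integral\<^sup>L Q (G v) = g v" using int by auto
  have i3: "integrable Q (\<lambda>s. G v' s - g v')" using i1 by auto
  have i4: "integrable Q (\<lambda>s. c *\<^sub>R (G v s - g v))" using i2 by auto
  show ?thesis
    using i3 i4 i1 i2 by (simp add: e1 e2 Q.prob_space)
qed

lemma noise_bound:
  fixes G :: "'d \<Rightarrow> 's \<Rightarrow> 'd::euclidean_space" and g :: "'d \<Rightarrow> 'd"
  assumes Q: "prob_space Q"
   and int: "\<And>v. integrable Q (G v) \<and> (\<integral>s. G v s \<partial>Q) = g v"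
   and var: "\<And>v. (\<integral>\<^sup>+s. ennreal ((norm (G v s - g v))\<^sup>2) \<partial>Q) \<le> ennreal \<sigma>2"
   and lip: "\<And>v w. (\<integral>\<^sup>+s. ennreal ((norm (G v s - G w s))\<^sup>2) \<partial>Q) \<le> ennreal (L2 * (norm (v - w))\<^sup>2)"
   and b: "0 \<le> \<beta>" "\<beta> \<le> 1" and L2: "L2 \<ge> 0" and s2: "\<sigma>2 \<ge> 0"
  shows "(\<integral>\<^sup>+s. ennreal ((norm ((G v' s - g v') - (1-\<beta>) *\<^sub>R (G v s - g v)))\<^sup>2) \<partial>Q)
     \<le> ennreal (2*\<beta>\<^sup>2*\<sigma>2) + ennreal (2*L2*(norm (v'-v))\<^sup>2)"
proof -
  interpret Q: prob_space Q by fact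
  define a where "a s = G v' s - g v'" for s
  define bb where "bb s = (G v' s - G v s) - (g v' - g v)" for s
  have Gm: "G u \<in> borel_measurable Q" for u using int[of u] by auto
  have am: "a \<in> borel_measurable Q" unfolding a_def using Gm by measurable
  have bm: "bb \<in> borel_measurable Q" unfolding bb_def using Gm by measurable
  have pw: "(norm ((G v' s - g v') - (1-\<beta>) *\<^sub>R (G v s - g v)))\<^sup>2 \<le> 2*\<beta>\<^sup>2 * (norm (a s))\<^sup>2 + 2 * (norm (bb s))\<^sup>2" for s
  proof -
    have "(G v' s - g v') - (1-\<beta>) *\<^sub>R (G v s - g v) = \<beta> *\<^sub>R a s + (1-\<beta>) *\<^sub>R bb s"
      unfolding a_def bb_def by (simp add: algebra_simps)
    then have "(norm ((G v' s - g v') - (1-\<beta>) *\<^sub>R (G v s - g v)))\<^sup>2 \<le> 2 * (norm (\<beta> *\<^sub>R a s))\<^sup>2 + 2 * (norm ((1-\<beta>) *\<^sub>R bb s))\<^sup>2"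
      using sq2 by metis
    also have "\<dots> = 2*\<beta>\<^sup>2 * (norm (a s))\<^sup>2 + 2 * (1-\<beta>)\<^sup>2 * (norm (bb s))\<^sup>2"
      by (simp add: power_mult_distrib)
    also have "\<dots> \<le> 2*\<beta>\<^sup>2 * (norm (a s))\<^sup>2 + 2 * (norm (bb s))\<^sup>2"
    proof -
      have "(1-\<beta>)\<^sup>2 \<le> 1" using b by (simp add: power_le_one)
      then show ?thesis by (intro add_left_mono) (simp add: mult_left_le_one_le)
    qed
    finally show ?thesis .
  qed
  have "(\<integral>\<^sup>+s. ennreal ((norm ((G v' s - g v') - (1-\<beta>) *\<^sub>R (G v s - g v)))\<^sup>2) \<partial>Q)
      \<le> (\<integral>\<^sup>+s. ennreal (2*\<beta>\<^sup>2) * ennreal ((norm (a s))\<^sup>2) + ennreal 2 * ennreal ((norm (bb s))\<^sup>2) \<partial>Q)"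
  proof (intro nn_integral_mono)
    fix s
    have "ennreal ((norm ((G v' s - g v') - (1-\<beta>) *\<^sub>R (G v s - g v)))\<^sup>2)
        \<le> ennreal (2*\<beta>\<^sup>2 * (norm (a s))\<^sup>2 + 2 * (norm (bb s))\<^sup>2)" using pw by (rule ennreal_leI)
    also have "\<dots> = ennreal (2*\<beta>\<^sup>2 * (norm (a s))\<^sup>2) + ennreal (2 * (norm (bb s))\<^sup>2)"
      by (rule ennreal_plus) auto
    also have "ennreal (2*\<beta>\<^sup>2 * (norm (a s))\<^sup>2) = ennreal (2*\<beta>\<^sup>2) * ennreal ((norm (a s))\<^sup>2)"
      by (rule ennreal_mult) auto
    also have "ennreal (2 * (norm (bb s))\<^sup>2) = ennreal 2 * ennreal ((norm (bb s))\<^sup>2)"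
      by (rule ennreal_mult) auto
    finally show "ennreal ((norm ((G v' s - g v') - (1-\<beta>) *\<^sub>R (G v s - g v)))\<^sup>2)
        \<le> ennreal (2*\<beta>\<^sup>2) * ennreal ((norm (a s))\<^sup>2) + ennreal 2 * ennreal ((norm (bb s))\<^sup>2)" .
  qed
  also have "\<dots> = ennreal (2*\<beta>\<^sup>2) * (\<integral>\<^sup>+s. ennreal ((norm (a s))\<^sup>2) \<partial>Q) + ennreal 2 * (\<integral>\<^sup>+s. ennreal ((norm (bb s))\<^sup>2) \<partial>Q)"
    using am bm by (simp add: nn_integral_add nn_integral_cmult)
  also have "\<dots> \<le> ennreal (2*\<beta>\<^sup>2) * ennreal \<sigma>2 + ennreal 2 * ennreal (L2*(norm (v'-v))\<^sup>2)"
  proof (intro add_mono mult_left_mono order_refl)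
    show "(\<integral>\<^sup>+s. ennreal ((norm (a s))\<^sup>2) \<partial>Q) \<le> ennreal \<sigma>2" unfolding a_def by (rule var)
    have mz: "integrable Q bb \<and> integral\<^sup>L Q bb = 0"
      using noise_mean[OF int Q, where v'=v' and c=1 and v=v] unfolding bb_def by (simp add: algebra_simps)
    have "(\<integral>\<^sup>+s. ennreal ((norm (bb s))\<^sup>2) \<partial>Q) \<le> ennreal ((norm (g v' - g v))\<^sup>2) + (\<integral>\<^sup>+s. ennreal ((norm (bb s))\<^sup>2) \<partial>Q)"
      by simp
    also have "\<dots> = (\<integral>\<^sup>+s. ennreal ((norm ((g v' - g v) + bb s))\<^sup>2) \<partial>Q)"
      using sq_mean_zero[OF Q, of bb "g v' - g v"] mz by simp
    also have "\<dots> = (\<integral>\<^sup>+s. ennreal ((norm (G v' s - G v s))\<^sup>2) \<partial>Q)"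
      unfolding bb_def by (simp add: algebra_simps)
    also have "\<dots> \<le> ennreal (L2*(norm (v'-v))\<^sup>2)" by (rule lip)
    finally show "(\<integral>\<^sup>+s. ennreal ((norm (bb s))\<^sup>2) \<partial>Q) \<le> ennreal (L2*(norm (v'-v))\<^sup>2)" .
  qed auto
  also have "\<dots> = ennreal (2*\<beta>\<^sup>2*\<sigma>2) + ennreal (2*L2*(norm (v'-v))\<^sup>2)"
  proof -
    have "ennreal (2*\<beta>\<^sup>2) * ennreal \<sigma>2 = ennreal (2*\<beta>\<^sup>2*\<sigma>2)"
      using s2 by (simp add: ennreal_mult)
    moreover have "ennreal 2 * ennreal (L2*(norm (v'-v))\<^sup>2) = ennreal (2*L2*(norm (v'-v))\<^sup>2)"
      using L2 by (simp add: mult.assoc ennreal_mult'')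
    ultimately show ?thesis by simp
  qed
  finally show ?thesis .
qed



lemma rec_sum:
  fixes a d th :: "nat \<Rightarrow> ennreal"
  assumes b0: "0 < \<beta>" and b1: "\<beta> < 1" and T: "T \<ge> 1"
   and step: "\<And>t. 1 \<le> t \<Longrightarrow> t < T \<Longrightarrow>
       a (Suc t) \<le> ennreal (1-\<beta>) * a t + (ennreal A + ennreal B * d t + ennreal C * th t)"
   and a1: "a 1 \<le> ennreal a0" and A: "A \<ge> 0" and B: "B \<ge> 0" and C: "C \<ge> 0" and a0: "a0 \<ge> 0"
  shows "(\<Sum>t=1..T. a t) \<le> ennreal (a0/\<beta>) + ennreal (A * real T/\<beta>)
      + ennreal (B/\<beta>) * (\<Sum>t=1..T-1. d t) + ennreal (C/\<beta>) * (\<Sum>t=1..T. th t)"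
proof -
  define c where "c t = ennreal A + ennreal B * d t + ennreal C * th t" for t
  have bsum: "ennreal \<beta> + ennreal (1-\<beta>) = 1" using b0 b1 by (simp flip: ennreal_plus)
  have claim: "ennreal \<beta> * (\<Sum>t=1..m. a t) + ennreal (1-\<beta>) * a m \<le> a 1 + (\<Sum>t=1..m-1. c t)"
    if "1 \<le> m" "m \<le> T" for m
    using that
  proof (induction m rule: dec_induct)
    case base
    have "ennreal \<beta> * a 1 + ennreal (1-\<beta>) * a 1 = (ennreal \<beta> + ennreal (1-\<beta>)) * a 1"
      by (simp add: distrib_right)
    then show ?case using bsum by simp
  next
    case (step m)
    have sa: "(\<Sum>t=1..Suc m. a t) = (\<Sum>t=1..m. a t) + a (Suc m)"
      using step.hyps by simp
    have sc: "(\<Sum>t=1..Suc m - 1. c t) = (\<Sum>t=1..m-1. c t) + c m"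
      using step.hyps by (cases m) auto
    have "ennreal \<beta> * (\<Sum>t=1..Suc m. a t) + ennreal (1-\<beta>) * a (Suc m)
        = ennreal \<beta> * (\<Sum>t=1..m. a t) + (ennreal \<beta> + ennreal (1-\<beta>)) * a (Suc m)"
      unfolding sa by (simp add: distrib_left distrib_right add.assoc)
    also have "\<dots> = ennreal \<beta> * (\<Sum>t=1..m. a t) + a (Suc m)" using bsum by simp
    also have "\<dots> \<le> ennreal \<beta> * (\<Sum>t=1..m. a t) + (ennreal (1-\<beta>) * a m + c m)"
      using assms(4)[of m] step.hyps step.prems unfolding c_def by (intro add_left_mono) auto
    also have "\<dots> = (ennreal \<beta> * (\<Sum>t=1..m. a t) + ennreal (1-\<beta>) * a m) + c m"
      by (simp add: add.assoc)
    also have "\<dots> \<le> (a 1 + (\<Sum>t=1..m-1. c t)) + c m"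
      using step.IH step.prems step.hyps by (intro add_right_mono) auto
    finally show ?case unfolding sc by (simp add: add.assoc)
  qed
  have "ennreal \<beta> * (\<Sum>t=1..T. a t) \<le> ennreal \<beta> * (\<Sum>t=1..T. a t) + ennreal (1-\<beta>) * a T"
    by simp
  also have "\<dots> \<le> a 1 + (\<Sum>t=1..T-1. c t)" using claim[OF T order_refl] .
  also have "\<dots> \<le> ennreal a0 + (\<Sum>t=1..T-1. c t)" using a1 by (rule add_right_mono)
  finally have main: "ennreal \<beta> * (\<Sum>t=1..T. a t) \<le> ennreal a0 + (\<Sum>t=1..T-1. c t)" .
  have inv: "ennreal (1/\<beta>) * ennreal \<beta> = 1" using b0 by (simp flip: ennreal_mult)
  have "(\<Sum>t=1..T. a t) = ennreal (1/\<beta>) * (ennreal \<beta> * (\<Sum>t=1..T. a t))"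
    by (simp add: mult.assoc[symmetric] inv)
  also have "\<dots> \<le> ennreal (1/\<beta>) * (ennreal a0 + (\<Sum>t=1..T-1. c t))"
    by (rule mult_left_mono[OF main]) simp
  also have "(\<Sum>t=1..T-1. c t) = of_nat (T-1) * ennreal A + ennreal B * (\<Sum>t=1..T-1. d t)
       + ennreal C * (\<Sum>t=1..T-1. th t)"
    by (simp add: c_def sum.distrib sum_distrib_left)
  also have "ennreal (1/\<beta>) * (ennreal a0 + (of_nat (T-1) * ennreal A + ennreal B * (\<Sum>t=1..T-1. d t)
       + ennreal C * (\<Sum>t=1..T-1. th t)))
     = ennreal (a0/\<beta>) + ennreal (real (T-1) * A/\<beta>) + ennreal (B/\<beta>) * (\<Sum>t=1..T-1. d t)
       + ennreal (C/\<beta>) * (\<Sum>t=1..T-1. th t)"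
  proof -
    have e1: "ennreal (1/\<beta>) * ennreal a0 = ennreal (a0/\<beta>)" using b0 a0 by (simp flip: ennreal_mult)
    have e2: "ennreal (1/\<beta>) * (of_nat (T-1) * ennreal A) = ennreal (real (T-1) * A/\<beta>)"
      using b0 A by (simp add: ennreal_of_nat_eq_real_of_nat flip: ennreal_mult)
    have e3: "ennreal (1/\<beta>) * (ennreal B * X) = ennreal (B/\<beta>) * X" for X
      using b0 B by (simp add: mult.assoc[symmetric] flip: ennreal_mult)
    have e4: "ennreal (1/\<beta>) * (ennreal C * X) = ennreal (C/\<beta>) * X" for X
      using b0 C by (simp add: mult.assoc[symmetric] flip: ennreal_mult)
    show ?thesis by (simp only: distrib_left e1 e2 e3 e4 add.assoc)
  qed
  also have "\<dots> \<le> ennreal (a0/\<beta>) + ennreal (A * real T/\<beta>) + ennreal (B/\<beta>) * (\<Sum>t=1..T-1. d t)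
       + ennreal (C/\<beta>) * (\<Sum>t=1..T. th t)"
  proof (intro add_mono order_refl mult_left_mono)
    show "ennreal (real (T - 1) * A / \<beta>) \<le> ennreal (A * real T / \<beta>)"
      using b0 A T by (intro ennreal_leI divide_right_mono) (auto simp: mult.commute intro!: mult_left_mono)
    show "(\<Sum>t=1..T-1. th t) \<le> (\<Sum>t=1..T. th t)"
      by (intro sum_mono2) auto
  qed auto
  finally show ?thesis .
qed



definition gen :: "'a measure \<Rightarrow> 's measure \<Rightarrow> ('k \<Rightarrow> 'a \<Rightarrow> 's) \<Rightarrow> 'k set \<Rightarrow> 'a measure" where
  "gen M S X J = sigma (space M) (\<Union>j\<in>J. {X j -` A \<inter> space M | A. A \<in> sets S})"

lemma gen_space[simp]: "space (gen M S X J) = space M"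
  unfolding gen_def by (rule space_measure_of) auto

lemma gen_sets: "sets (gen M S X J) = sigma_sets (space M) (\<Union>j\<in>J. {X j -` A \<inter> space M | A. A \<in> sets S})"
  unfolding gen_def by (rule sets_measure_of) auto

lemma gen_sub:
  assumes "\<And>j. j \<in> J \<Longrightarrow> X j \<in> measurable M S"
  shows "subalgebra M (gen M S X J)"
  unfolding subalgebra_def gen_sets
  using assms by (auto intro!: sets.sigma_sets_subset measurable_sets)

lemma gen_mono:
  assumes "J \<subseteq> J'"
  shows "subalgebra (gen M S X J') (gen M S X J)"
  unfolding subalgebra_def gen_sets using assms by (auto intro!: sigma_sets_mono')

lemma gen_meas:
  assumes "j \<in> J" "X j \<in> measurable M S"
  shows "X j \<in> measurable (gen M S X J) S"
proof (rule measurableI)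
  fix x assume "x \<in> space (gen M S X J)"
  then show "X j x \<in> space S" using assms(2) by (auto simp: measurable_space)
next
  fix A assume "A \<in> sets S"
  then show "X j -` A \<inter> space (gen M S X J) \<in> sets (gen M S X J)"
    unfolding gen_sets gen_space using assms(1) by (intro sigma_sets.Basic) blast
qed

lemma gen_indep:
  assumes P: "prob_space M" and ind: "prob_space.indep_vars M (\<lambda>_. S) X I"
    and J: "J \<subseteq> I" and k: "k \<in> I" "k \<notin> J"
    and A: "A \<in> sets (gen M S X J)" and B: "B \<in> sets S"
  shows "emeasure M (A \<inter> (X k -` B \<inter> space M)) = emeasure M A * emeasure M (X k -` B \<inter> space M)"
proof -
  interpret M: prob_space M by fact
  define E where "E i = {X i -` A \<inter> space M | A. A \<in> sets S}" for i
  define Ib where "Ib b = (if b then J else {k})" for b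
  have iE: "M.indep_sets E I" using ind unfolding M.indep_vars_def2 E_def by auto
  have "M.indep_sets E (\<Union>b\<in>UNIV. Ib b)"
    by (rule M.indep_sets_mono_index[OF _ iE]) (use J k in \<open>auto simp: Ib_def\<close>)
  then have "M.indep_sets (\<lambda>b. sigma_sets (space M) (\<Union>i\<in>Ib b. E i)) UNIV"
  proof (rule M.indep_sets_collect_sigma)
    fix i b show "Int_stable (E i)"
      unfolding E_def Int_stable_def
      by (auto, rule_tac x="A \<inter> Aa" in exI, auto)
  next
    show "disjoint_family_on Ib UNIV" using k by (auto simp: disjoint_family_on_def Ib_def)
  qed
  moreover have "(\<lambda>b. sigma_sets (space M) (\<Union>i\<in>Ib b. E i)) =
      case_bool (sigma_sets (space M) (\<Union>i\<in>J. E i)) (sigma_sets (space M) (E k))"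
    by (auto simp: Ib_def fun_eq_iff split: bool.split)
  ultimately have "M.indep_set (sigma_sets (space M) (\<Union>i\<in>J. E i)) (sigma_sets (space M) (E k))"
    unfolding M.indep_set_def by simp
  moreover have "A \<in> sigma_sets (space M) (\<Union>i\<in>J. E i)" using A unfolding gen_sets E_def .
  moreover have "X k -` B \<inter> space M \<in> sigma_sets (space M) (E k)"
    using B unfolding E_def by (intro sigma_sets.Basic) blast
  ultimately have "M.prob (A \<inter> (X k -` B \<inter> space M)) = M.prob A * M.prob (X k -` B \<inter> space M)"
    by (rule M.indep_setD)
  then show ?thesis
    by (simp add: M.emeasure_eq_measure ennreal_mult)
qed

lemma indep_quad_sum:
  fixes U :: "'a \<Rightarrow> 'd::euclidean_space" and w :: "'k \<Rightarrow> 'a \<Rightarrow> 's \<Rightarrow> 'd"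
    and X :: "'k \<Rightarrow> 'a \<Rightarrow> 's"
  assumes P: "prob_space M" and ind: "prob_space.indep_vars M (\<lambda>_. S) X I"
    and K: "finite K" "K \<subseteq> I" and J: "J \<subseteq> I" "J \<inter> K = {}"
    and U: "U \<in> borel_measurable (gen M S X J)"
    and w: "\<And>k. k \<in> K \<Longrightarrow> case_prod (w k) \<in> borel_measurable (gen M S X J \<Otimes>\<^sub>M S)"
    and wi: "\<And>k \<omega>. k \<in> K \<Longrightarrow> \<omega> \<in> space M \<Longrightarrow>
        integrable (distr M S (X k)) (w k \<omega>) \<and> (\<integral>s. w k \<omega> s \<partial>distr M S (X k)) = 0"
  shows "(\<integral>\<^sup>+\<omega>. ennreal ((norm (U \<omega> + (\<Sum>k\<in>K. w k \<omega> (X k \<omega>))))\<^sup>2) \<partial>M)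
    = (\<integral>\<^sup>+\<omega>. ennreal ((norm (U \<omega>))\<^sup>2) \<partial>M)
      + (\<Sum>k\<in>K. \<integral>\<^sup>+\<omega>. (\<integral>\<^sup>+s. ennreal ((norm (w k \<omega> s))\<^sup>2) \<partial>distr M S (X k)) \<partial>M)"
  using K J w wi
proof (induction K rule: finite_induct)
  case empty
  then show ?case by simp
next
  case (insert k K)
  interpret M: prob_space M by fact
  have Xm: "\<And>i. i \<in> I \<Longrightarrow> X i \<in> measurable M S"
    using ind unfolding M.indep_vars_def2 by auto
  define F where "F = gen M S X (J \<union> K)"
  have sub: "subalgebra M F" unfolding F_def
    by (rule gen_sub) (use Xm insert.prems in auto)
  have subJ: "subalgebra F (gen M S X J)" unfolding F_def by (rule gen_mono) auto
  have idm: "(\<lambda>\<omega>. \<omega>) \<in> measurable F (gen M S X J)"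
    by (rule measurable_from_subalg[OF subJ]) (rule measurable_ident_sets, rule refl)
  have pm: "(\<lambda>\<omega>. (\<omega>, X j \<omega>)) \<in> measurable F (gen M S X J \<Otimes>\<^sub>M S)" if "j \<in> K" for j
  proof (rule measurable_Pair[OF idm])
    show "X j \<in> measurable F S" unfolding F_def
      by (rule gen_meas) (use that insert.prems Xm in auto)
  qed
  have UF: "U \<in> borel_measurable F" by (rule measurable_from_subalg[OF subJ U])
  have U'F: "(\<lambda>\<omega>. U \<omega> + (\<Sum>j\<in>K. w j \<omega> (X j \<omega>))) \<in> borel_measurable F"
  proof (rule borel_measurable_add[OF UF], rule borel_measurable_sum)
    fix j assume "j \<in> K"
    from measurable_compose[OF pm[OF this] insert.prems(4)] \<open>j \<in> K\<close>
    show "(\<lambda>\<omega>. w j \<omega> (X j \<omega>)) \<in> borel_measurable F" by simp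
  qed
  have pp: "(\<lambda>p. (fst p, snd p)) \<in> measurable (F \<Otimes>\<^sub>M S) (gen M S X J \<Otimes>\<^sub>M S)"
    by (rule measurable_Pair[OF measurable_compose[OF measurable_fst idm] measurable_snd])
  have wk: "case_prod (w k) \<in> borel_measurable (F \<Otimes>\<^sub>M S)"
    using measurable_compose[OF pp insert.prems(4)[of k]] by simp
  have kI: "k \<in> I" "k \<notin> J \<union> K" using insert by auto
  have indk: "\<And>A B. A \<in> sets F \<Longrightarrow> B \<in> sets S \<Longrightarrow>
        emeasure M (A \<inter> (X k -` B \<inter> space M)) = emeasure M A * emeasure M (X k -` B \<inter> space M)"
    unfolding F_def by (rule gen_indep[OF P ind _ kI]) (use insert in auto)
  have "(\<integral>\<^sup>+\<omega>. ennreal ((norm (U \<omega> + (\<Sum>j\<in>insert k K. w j \<omega> (X j \<omega>))))\<^sup>2) \<partial>M)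
     = (\<integral>\<^sup>+\<omega>. ennreal ((norm ((U \<omega> + (\<Sum>j\<in>K. w j \<omega> (X j \<omega>))) + w k \<omega> (X k \<omega>)))\<^sup>2) \<partial>M)"
    using insert.hyps by (simp add: algebra_simps)
  also have "\<dots> = (\<integral>\<^sup>+\<omega>. ennreal ((norm (U \<omega> + (\<Sum>j\<in>K. w j \<omega> (X j \<omega>))))\<^sup>2) \<partial>M)
      + (\<integral>\<^sup>+\<omega>. (\<integral>\<^sup>+s. ennreal ((norm (w k \<omega> s))\<^sup>2) \<partial>distr M S (X k)) \<partial>M)"
    by (rule indep_quad[OF P sub Xm[OF kI(1)] indk U'F wk]) (use insert.prems in auto)
  also have "(\<integral>\<^sup>+\<omega>. ennreal ((norm (U \<omega> + (\<Sum>j\<in>K. w j \<omega> (X j \<omega>))))\<^sup>2) \<partial>M)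
     = (\<integral>\<^sup>+\<omega>. ennreal ((norm (U \<omega>))\<^sup>2) \<partial>M)
      + (\<Sum>j\<in>K. \<integral>\<^sup>+\<omega>. (\<integral>\<^sup>+s. ennreal ((norm (w j \<omega> s))\<^sup>2) \<partial>distr M S (X j)) \<partial>M)"
    by (rule insert.IH) (use insert.prems in auto)
  finally show ?case using insert.hyps by (simp add: add.assoc add.commute)
qed



theorem lemma7:
  fixes M :: "'a measure" and S :: "'s measure" and P :: "nat \<Rightarrow> 's measure"
    and \<xi> :: "nat \<Rightarrow> nat \<Rightarrow> nat \<Rightarrow> 'a \<Rightarrow> 's"
    and f :: "nat \<Rightarrow> 'd::euclidean_space \<Rightarrow> 's \<Rightarrow> real"
    and Gf :: "nat \<Rightarrow> 'd \<Rightarrow> 's \<Rightarrow> 'd"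
    and Gu :: "nat \<Rightarrow> 'd \<Rightarrow> 'd"
    and fhat :: "nat \<Rightarrow> 'd \<Rightarrow> 'd \<Rightarrow> 's \<Rightarrow> real"
    and h g :: "'d \<Rightarrow> real"
    and W :: "nat \<Rightarrow> nat \<Rightarrow> real" and E :: "(nat \<times> nat) set"
    and x xh z y :: "nat \<Rightarrow> nat \<Rightarrow> 'a \<Rightarrow> 'd" and x1 :: 'd
    and n b0 T :: nat and \<alpha> \<beta> \<mu> L :: real and \<sigma> :: "nat \<Rightarrow> real"
  assumes n_pos: "n \<ge> 1" and b0_pos: "b0 \<ge> 1"
    and alpha: "0 < \<alpha>" "\<alpha> < 1" and beta: "0 < \<beta>" "\<beta> < 1" and mu: "\<mu> > 0"
    and T: "T > 1"
    \<comment> \<open>probability space and independent samples; node i's samples are distributed as P i\<close>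
    and prob: "prob_space M"
    and indep: "prob_space.indep_vars M (\<lambda>_. S) (\<lambda>(i, t, r). \<xi> i t r) (sample_idx n b0)"
    and distr: "\<And>i t r. (i, t, r) \<in> sample_idx n b0 \<Longrightarrow> distr M S (\<xi> i t r) = P i"
    \<comment> \<open>f_i(., s) differentiable with gradient Gf; Gu i is the gradient of u_i = E f_i(., xi_i)\<close>
    and f_diff: "\<And>i v s. i < n \<Longrightarrow> ((\<lambda>w. f i w s) has_derivative (\<lambda>w. inner (Gf i v s) w)) (at v)"
    and u_diff: "\<And>i v. i < n \<Longrightarrow>
        ((\<lambda>w. \<integral>s. f i w s \<partial>P i) has_derivative (\<lambda>w. inner (Gu i v) w)) (at v)"
    and Gf_meas: "\<And>i. i < n \<Longrightarrow> (\<lambda>(v, s). Gf i v s) \<in> borel_measurable (borel \<Otimes>\<^sub>M S)"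
    \<comment> \<open>(A2) unbiasedness\<close>
    and A2: "\<And>i v. i < n \<Longrightarrow> integrable (P i) (Gf i v) \<and> (\<integral>s. Gf i v s \<partial>P i) = Gu i v"
    \<comment> \<open>(A3) bounded variance\<close>
    and A3: "\<And>i v. i < n \<Longrightarrow>
        (\<integral>\<^sup>+ s. ennreal ((norm (Gf i v s - Gu i v))\<^sup>2) \<partial>P i) \<le> ennreal ((\<sigma> i)\<^sup>2)"
    \<comment> \<open>(A4) mean-squared Lipschitz gradients\<close>
    and A4: "\<And>i v w. i < n \<Longrightarrow>
        (\<integral>\<^sup>+ s. ennreal ((norm (Gf i v s - Gf i w s))\<^sup>2) \<partial>P i) \<le> ennreal (L\<^sup>2 * (norm (v - w))\<^sup>2)"
    \<comment> \<open>(A7) communication graph and mixing matrix\<close>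
    and E_sub: "E \<subseteq> {..<n} \<times> {..<n}"
    and E_sym: "\<And>i j. (i, j) \<in> E \<Longrightarrow> (j, i) \<in> E"
    and E_conn: "\<And>i j. i < n \<Longrightarrow> j < n \<Longrightarrow> (i, j) \<in> E\<^sup>*"
    and W_nonneg: "\<And>i j. i < n \<Longrightarrow> j < n \<Longrightarrow> W i j \<ge> 0"
    and W_row: "\<And>i. i < n \<Longrightarrow> (\<Sum>j<n. W i j) = 1"
    and W_col: "\<And>j. j < n \<Longrightarrow> (\<Sum>i<n. W i j) = 1"
    and W_diag: "\<And>i. i < n \<Longrightarrow> W i i > 0"
    and W_edge: "\<And>i j. i < n \<Longrightarrow> j < n \<Longrightarrow> i \<noteq> j \<Longrightarrow> (W i j > 0 \<longleftrightarrow> (i, j) \<in> E)"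
    \<comment> \<open>problem data\<close>
    and h_conv: "convex_on UNIV h" and g_conv: "convex_on UNIV g"
    and fhat_sc: "\<And>i v s. i < n \<Longrightarrow> strongly_convex \<mu> (\<lambda>w. fhat i w v s)"
    and fhat_grad: "\<And>i v s. i < n \<Longrightarrow>
        ((\<lambda>w. fhat i w v s) has_derivative (\<lambda>w. inner (Gf i v s) w)) (at v)"
    \<comment> \<open>D-MSSCA iterates\<close>
    and x1_in: "g x1 \<le> 0"
    and x_init: "\<And>i \<omega>. i < n \<Longrightarrow> \<omega> \<in> space M \<Longrightarrow> x i 1 \<omega> = x1"
    and z_init: "\<And>i \<omega>. i < n \<Longrightarrow> \<omega> \<in> space M \<Longrightarrow>
        z i 1 \<omega> = (1 / real b0) *\<^sub>R (\<Sum>r=1..b0. Gf i (x i 1 \<omega>) (\<xi> i 1 r \<omega>))"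
    and y_init: "\<And>i \<omega>. i < n \<Longrightarrow> \<omega> \<in> space M \<Longrightarrow> y i 1 \<omega> = z i 1 \<omega>"
    and xh_min: "\<And>i t \<omega>. i < n \<Longrightarrow> t \<ge> 1 \<Longrightarrow> \<omega> \<in> space M \<Longrightarrow>
        (let \<Phi> = (\<lambda>v. fhat i v (x i t \<omega>) (\<xi> i t 1 \<omega>)
                    + (if t = 1 then 0 else (1 - \<beta>) * inner (z i (t - 1) \<omega> - Gf i (x i (t - 1) \<omega>) (\<xi> i t 1 \<omega>)) (v - x i t \<omega>))
                    + inner (y i t \<omega> - z i t \<omega>) (v - x i t \<omega>) + h v)
         in g (xh i t \<omega>) \<le> 0 \<and> (\<forall>v. g v \<le> 0 \<longrightarrow> \<Phi> (xh i t \<omega>) \<le> \<Phi> v))"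
    and xh_adapted: "\<And>i t. i < n \<Longrightarrow> t \<ge> 1 \<Longrightarrow> xh i t \<in> borel_measurable (hist M S n b0 \<xi> t)"
    and x_upd: "\<And>i t \<omega>. i < n \<Longrightarrow> t \<ge> 1 \<Longrightarrow> \<omega> \<in> space M \<Longrightarrow>
        x i (t + 1) \<omega> = (\<Sum>j<n. W i j *\<^sub>R (x j t \<omega> + \<alpha> *\<^sub>R (xh j t \<omega> - x j t \<omega>)))"
    and z_upd: "\<And>i t \<omega>. i < n \<Longrightarrow> t \<ge> 1 \<Longrightarrow> \<omega> \<in> space M \<Longrightarrow>
        z i (t + 1) \<omega> = Gf i (x i (t + 1) \<omega>) (\<xi> i (t + 1) 1 \<omega>)
                       + (1 - \<beta>) *\<^sub>R (z i t \<omega> - Gf i (x i t \<omega>) (\<xi> i (t + 1) 1 \<omega>))"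
    and y_upd: "\<And>i t \<omega>. i < n \<Longrightarrow> t \<ge> 1 \<Longrightarrow> \<omega> \<in> space M \<Longrightarrow>
        y i (t + 1) \<omega> = (\<Sum>j<n. W i j *\<^sub>R (y j t \<omega> + z j (t + 1) \<omega> - z j t \<omega>))"
  shows
    "(\<Sum>t=1..T. \<integral>\<^sup>+ \<omega>. ennreal ((norm (avg n (\<lambda>i. z i t \<omega>) - avg n (\<lambda>i. Gu i (x i t \<omega>))))\<^sup>2) \<partial>M)
       \<le> ennreal ((\<Sum>i<n. (\<sigma> i)\<^sup>2) / ((real n)\<^sup>2 * real b0 * \<beta>))
         + ennreal (2 * \<beta> * (\<Sum>i<n. (\<sigma> i)\<^sup>2) * real T / (real n)\<^sup>2)
         + ennreal (6 * L\<^sup>2 * \<alpha>\<^sup>2 / ((real n)\<^sup>2 * \<beta>))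
             * (\<Sum>t=1..T-1. \<integral>\<^sup>+ \<omega>. ennreal ((stk_norm n (\<lambda>i. xh i t \<omega> - x i t \<omega>))\<^sup>2) \<partial>M)
         + ennreal (12 * L\<^sup>2 / (\<beta> * (real n)\<^sup>2))
             * (\<Sum>t=1..T. \<integral>\<^sup>+ \<omega>. ennreal ((stk_norm n (\<lambda>i. x i t \<omega> - avg n (\<lambda>j. x j t \<omega>)))\<^sup>2) \<partial>M)
     \<and> (\<Sum>t=1..T. \<integral>\<^sup>+ \<omega>. ennreal ((stk_norm n (\<lambda>i. z i t \<omega> - Gu i (x i t \<omega>)))\<^sup>2) \<partial>M)
       \<le> ennreal ((\<Sum>i<n. (\<sigma> i)\<^sup>2) / (real b0 * \<beta>))
         + ennreal (2 * \<beta> * (\<Sum>i<n. (\<sigma> i)\<^sup>2) * real T)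
         + ennreal (6 * L\<^sup>2 * \<alpha>\<^sup>2 / \<beta>)
             * (\<Sum>t=1..T-1. \<integral>\<^sup>+ \<omega>. ennreal ((stk_norm n (\<lambda>i. xh i t \<omega> - x i t \<omega>))\<^sup>2) \<partial>M)
         + ennreal (12 * L\<^sup>2 / \<beta>)
             * (\<Sum>t=1..T. \<integral>\<^sup>+ \<omega>. ennreal ((stk_norm n (\<lambda>i. x i t \<omega> - avg n (\<lambda>j. x j t \<omega>)))\<^sup>2) \<partial>M)"
proof -
  interpret M: prob_space M by (rule prob)
  define Xs :: "nat \<times> nat \<times> nat \<Rightarrow> 'a \<Rightarrow> 's" where "Xs = (\<lambda>(i, t, r). \<xi> i t r)"
  define I where "I = sample_idx n b0"
  define Hs where "Hs t = {k \<in> I. fst (snd k) \<le> t}" for t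
  have ind': "M.indep_vars (\<lambda>_. S) Xs I" using indep unfolding Xs_def I_def .
  have Xm: "Xs k \<in> measurable M S" if "k \<in> I" for k
    using ind' that unfolding M.indep_vars_def2 by auto
  have Xs_eq[simp]: "Xs (i, t, r) = \<xi> i t r" for i t r by (simp add: Xs_def)
  have hist_eq: "hist M S n b0 \<xi> t = gen M S Xs (Hs t)" for t
    unfolding hist_def gen_def
    apply (rule arg_cong[where f="sigma (space M)"])
    apply (auto simp: Hs_def I_def)
     apply blast
    apply blast
    done
  have distrP: "distr M S (Xs k) = P (fst k)" if "k \<in> I" for k
    using that distr unfolding I_def by (cases k) auto
  have I1: "(i, 1, r) \<in> I" if "i < n" "1 \<le> r" "r \<le> b0" for i r
    using that by (simp add: I_def sample_idx_def)
  have I2: "(i, Suc t, 1) \<in> I" if "i < n" "1 \<le> t" for i t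
    using that by (simp add: I_def sample_idx_def)
  have Pprob: "prob_space (P i)" if "i < n" for i
  proof -
    have "(i, 1, 1) \<in> I" using I1[OF that] b0_pos by simp
    then show ?thesis using distrP[of "(i,1,1)"] M.prob_space_distr[OF Xm] by force
  qed
  have Gum: "Gu i \<in> borel_measurable borel" if "i < n" for i
  proof -
    interpret Q: prob_space "P i" by (rule Pprob[OF that])
    have sP: "sets (P i) = sets S"
    proof -
      have "(i, 1, 1) \<in> I" using I1[OF that] b0_pos by simp
      then show ?thesis using distrP[of "(i,1,1)"] by (metis fst_conv sets_distr)
    qed
    have "(\<lambda>(v, s). Gf i v s) \<in> borel_measurable (borel \<Otimes>\<^sub>M P i)"
      using Gf_meas[OF that] by (simp add: measurable_cong_sets[OF sets_pair_measure_cong[OF refl sP] refl])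
    then have "(\<lambda>v. \<integral>s. Gf i v s \<partial>P i) \<in> borel_measurable borel"
      by (rule Q.borel_measurable_lebesgue_integral)
    moreover have "(\<lambda>v. \<integral>s. Gf i v s \<partial>P i) = Gu i" using A2[OF that] by auto
    ultimately show ?thesis by simp
  qed
  have Gfc: "(\<lambda>\<omega>. Gf i (a \<omega>) (b \<omega>)) \<in> borel_measurable F"
    if "i < n" "a \<in> borel_measurable F" "b \<in> measurable F S" for i a b F
    using measurable_compose[OF measurable_Pair[OF that(2,3)] Gf_meas[OF that(1)]] by simp
  have Gfc2: "(\<lambda>p. Gf i (a (fst p)) (snd p)) \<in> borel_measurable (F \<Otimes>\<^sub>M S)"
    if "i < n" "a \<in> borel_measurable F" for i a F
    by (rule Gfc[OF that(1) measurable_compose[OF measurable_fst that(2)] measurable_snd])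
  have Gum2: "(\<lambda>\<omega>. Gu i (a \<omega>)) \<in> borel_measurable F"
    if "i < n" "a \<in> borel_measurable F" for i a F
    using measurable_compose[OF that(2) Gum[OF that(1)]] .
  have gsub: "subalgebra M (gen M S Xs (Hs t))" for t
    by (rule gen_sub) (auto simp: Hs_def intro: Xm)
  have gmono: "subalgebra (gen M S Xs (Hs t')) (gen M S Xs (Hs t))" if "t \<le> t'" for t t'
    by (rule gen_mono) (use that in \<open>auto simp: Hs_def\<close>)
  have Xg: "\<xi> i t r \<in> measurable (gen M S Xs (Hs t')) S" if "(i,t,r) \<in> I" "t \<le> t'" for i t r t'
  proof -
    have "(i,t,r) \<in> Hs t'" using that by (simp add: Hs_def)
    then have "Xs (i,t,r) \<in> measurable (gen M S Xs (Hs t')) S" by (rule gen_meas) (rule Xm[OF that(1)])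
    then show ?thesis by simp
  qed
  have meas: "\<forall>i<n. x i t \<in> borel_measurable (gen M S Xs (Hs (t - 1))) \<and> z i t \<in> borel_measurable (gen M S Xs (Hs t))"
    if "1 \<le> t" for t
    using that
  proof (induction t rule: nat_induct_at_least)
    case base
    show ?case
    proof (intro allI impI conjI)
      fix i assume i: "i < n"
      show "x i 1 \<in> borel_measurable (gen M S Xs (Hs (1 - 1)))"
      proof -
        have xi1: "\<And>\<omega>. \<omega> \<in> space M \<Longrightarrow> x i 1 \<omega> = x1" by (rule x_init[OF i])
        have "(\<lambda>_. x1) \<in> borel_measurable (gen M S Xs (Hs (1 - 1)))" by simp
        then show ?thesis by (rule measurable_cong[THEN iffD1, rotated]) (metis One_nat_def xi1 gen_space)
      qed
      have "(\<lambda>\<omega>. (1 / real b0) *\<^sub>R (\<Sum>r=1..b0. Gf i x1 (\<xi> i 1 r \<omega>))) \<in> borel_measurable (gen M S Xs (Hs 1))"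
        by (intro borel_measurable_scaleR borel_measurable_const borel_measurable_sum Gfc[OF i] Xg I1[OF i]) auto
      then show "z i 1 \<in> borel_measurable (gen M S Xs (Hs 1))"
        by (subst measurable_cong[where g="\<lambda>\<omega>. (1 / real b0) *\<^sub>R (\<Sum>r=1..b0. Gf i x1 (\<xi> i 1 r \<omega>))"])
           (auto simp: z_init[OF i, unfolded One_nat_def] x_init[OF i, unfolded One_nat_def])
    qed
  next
    case (Suc t)
    show ?case
    proof (intro allI impI conjI)
      fix i assume i: "i < n"
      have xt: "x j t \<in> borel_measurable (gen M S Xs (Hs t))" if "j < n" for j
        using measurable_from_subalg[OF gmono[of "t-1" t]] Suc.IH that by auto
      have xht: "xh j t \<in> borel_measurable (gen M S Xs (Hs t))" if "j < n" for j
        using xh_adapted[OF that Suc.hyps] by (simp add: hist_eq)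
      have "(\<lambda>\<omega>. \<Sum>j<n. W i j *\<^sub>R (x j t \<omega> + \<alpha> *\<^sub>R (xh j t \<omega> - x j t \<omega>))) \<in> borel_measurable (gen M S Xs (Hs t))"
        using xt xht by (intro borel_measurable_sum borel_measurable_scaleR borel_measurable_add borel_measurable_diff borel_measurable_const) auto
      then show x': "x i (Suc t) \<in> borel_measurable (gen M S Xs (Hs (Suc t - 1)))"
        by (subst measurable_cong[where g="\<lambda>\<omega>. \<Sum>j<n. W i j *\<^sub>R (x j t \<omega> + \<alpha> *\<^sub>R (xh j t \<omega> - x j t \<omega>))"])
           (auto simp: x_upd[OF i Suc.hyps, simplified])
      have x2: "x i (Suc t) \<in> borel_measurable (gen M S Xs (Hs (Suc t)))"
        using measurable_from_subalg[OF gmono[of t "Suc t"]] x' by auto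
      have x3: "x i t \<in> borel_measurable (gen M S Xs (Hs (Suc t)))"
        using measurable_from_subalg[OF gmono[of t "Suc t"]] xt[OF i] by auto
      have zt: "z i t \<in> borel_measurable (gen M S Xs (Hs (Suc t)))"
        using measurable_from_subalg[OF gmono[of t "Suc t"]] Suc.IH i by auto
      have xi: "\<xi> i (Suc t) 1 \<in> measurable (gen M S Xs (Hs (Suc t))) S"
        by (rule Xg[OF I2[OF i Suc.hyps]]) simp
      have "(\<lambda>\<omega>. Gf i (x i (Suc t) \<omega>) (\<xi> i (Suc t) 1 \<omega>) + (1 - \<beta>) *\<^sub>R (z i t \<omega> - Gf i (x i t \<omega>) (\<xi> i (Suc t) 1 \<omega>)))
          \<in> borel_measurable (gen M S Xs (Hs (Suc t)))"
        by (intro borel_measurable_add borel_measurable_scaleR borel_measurable_diff borel_measurable_const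
            Gfc[OF i x2 xi] Gfc[OF i x3 xi] zt)
      then show "z i (Suc t) \<in> borel_measurable (gen M S Xs (Hs (Suc t)))"
        by (subst measurable_cong[where g="\<lambda>\<omega>. Gf i (x i (Suc t) \<omega>) (\<xi> i (Suc t) 1 \<omega>) + (1 - \<beta>) *\<^sub>R (z i t \<omega> - Gf i (x i t \<omega>) (\<xi> i (Suc t) 1 \<omega>))"])
           (auto simp: z_upd[OF i Suc.hyps, simplified])
    qed
  qed
  define e where "e i t \<omega> = z i t \<omega> - Gu i (x i t \<omega>)" for i t \<omega>
  define wn where "wn i t \<omega> s = (Gf i (x i (Suc t) \<omega>) s - Gu i (x i (Suc t) \<omega>)) - (1-\<beta>) *\<^sub>R (Gf i (x i t \<omega>) s - Gu i (x i t \<omega>))"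
    for i t \<omega> s
  have e_rec: "e i (Suc t) \<omega> = (1-\<beta>) *\<^sub>R e i t \<omega> + wn i t \<omega> (\<xi> i (Suc t) 1 \<omega>)"
    if "i < n" "1 \<le> t" "\<omega> \<in> space M" for i t \<omega>
    using z_upd[OF that] by (simp add: e_def wn_def algebra_simps)
  have xmt: "x i t \<in> borel_measurable (gen M S Xs (Hs t))" if "i < n" "1 \<le> t" for i t
    using measurable_from_subalg[OF gmono[of "t-1" t]] meas[OF that(2)] that(1) by auto
  have xmt': "x i (Suc t) \<in> borel_measurable (gen M S Xs (Hs t))" if "i < n" "1 \<le> t" for i t
    using meas[of "Suc t"] that by auto
  have em: "e i t \<in> borel_measurable (gen M S Xs (Hs t))" if "i < n" "1 \<le> t" for i t
  proof -
    have "(\<lambda>\<omega>. z i t \<omega> - Gu i (x i t \<omega>)) \<in> borel_measurable (gen M S Xs (Hs t))"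
      using meas[OF that(2)] that(1) Gum2[OF that(1) xmt[OF that]] by (intro borel_measurable_diff) auto
    then show ?thesis by (simp add: e_def[abs_def])
  qed
  have wnm: "case_prod (wn i t) \<in> borel_measurable (gen M S Xs (Hs t) \<Otimes>\<^sub>M S)" if "i < n" "1 \<le> t" for i t
  proof -
    have a: "(\<lambda>p. x i (Suc t) (fst p)) \<in> borel_measurable (gen M S Xs (Hs t) \<Otimes>\<^sub>M S)"
      by (rule measurable_compose[OF measurable_fst xmt'[OF that]])
    have b: "(\<lambda>p. x i t (fst p)) \<in> borel_measurable (gen M S Xs (Hs t) \<Otimes>\<^sub>M S)"
      by (rule measurable_compose[OF measurable_fst xmt[OF that]])
    have "(\<lambda>p. (Gf i (x i (Suc t) (fst p)) (snd p) - Gu i (x i (Suc t) (fst p))) - (1-\<beta>) *\<^sub>R (Gf i (x i t (fst p)) (snd p) - Gu i (x i t (fst p))))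
       \<in> borel_measurable (gen M S Xs (Hs t) \<Otimes>\<^sub>M S)"
      by (intro borel_measurable_diff borel_measurable_scaleR borel_measurable_const
          Gfc2[OF that(1) xmt'[OF that]] Gfc2[OF that(1) xmt[OF that]] Gum2[OF that(1) a] Gum2[OF that(1) b])
    moreover have "case_prod (wn i t) = (\<lambda>p. (Gf i (x i (Suc t) (fst p)) (snd p) - Gu i (x i (Suc t) (fst p))) - (1-\<beta>) *\<^sub>R (Gf i (x i t (fst p)) (snd p) - Gu i (x i t (fst p))))"
      by (auto simp: wn_def fun_eq_iff)
    ultimately show ?thesis by simp
  qed
  have wn_mean: "integrable (P i) (wn i t \<omega>) \<and> (\<integral>s. wn i t \<omega> s \<partial>P i) = 0" if "i < n" for i t \<omega>
    unfolding wn_def[abs_def]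
    by (rule noise_mean[where G="Gf i" and g="Gu i", OF _ Pprob[OF that]]) (use A2[OF that] in auto)
  have wn_bd: "(\<integral>\<^sup>+s. ennreal ((norm (wn i t \<omega> s))\<^sup>2) \<partial>P i)
      \<le> ennreal (2*\<beta>\<^sup>2*(\<sigma> i)\<^sup>2) + ennreal (2*L\<^sup>2*(norm (x i (Suc t) \<omega> - x i t \<omega>))\<^sup>2)" if "i < n" for i t \<omega>
    unfolding wn_def
    by (rule noise_bound[where G="Gf i" and g="Gu i", OF Pprob[OF that]])
       (use A2[OF that] A3[OF that] A4[OF that] beta in auto)
  have Hs_sub: "Hs t \<subseteq> I" for t by (auto simp: Hs_def)
  have notin: "(i, Suc t, 1) \<notin> Hs t" for i t by (auto simp: Hs_def)
  have stepU: "(\<integral>\<^sup>+\<omega>. ennreal ((norm (e i (Suc t) \<omega>))\<^sup>2) \<partial>M)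
      \<le> ennreal (1-\<beta>) * (\<integral>\<^sup>+\<omega>. ennreal ((norm (e i t \<omega>))\<^sup>2) \<partial>M)
        + (\<integral>\<^sup>+\<omega>. (\<integral>\<^sup>+s. ennreal ((norm (wn i t \<omega> s))\<^sup>2) \<partial>P i) \<partial>M)" if "i < n" "1 \<le> t" for i t
  proof -
    have Um: "(\<lambda>\<omega>. (1-\<beta>) *\<^sub>R e i t \<omega>) \<in> borel_measurable (gen M S Xs (Hs t))"
      using em[OF that] by (intro borel_measurable_scaleR borel_measurable_const)
    have q: "(\<integral>\<^sup>+\<omega>. ennreal ((norm ((1-\<beta>) *\<^sub>R e i t \<omega> + (\<Sum>k\<in>{(i, Suc t, 1)}. wn i t \<omega> (Xs k \<omega>))))\<^sup>2) \<partial>M)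
      = (\<integral>\<^sup>+\<omega>. ennreal ((norm ((1-\<beta>) *\<^sub>R e i t \<omega>))\<^sup>2) \<partial>M)
        + (\<Sum>k\<in>{(i, Suc t, 1)}. \<integral>\<^sup>+\<omega>. (\<integral>\<^sup>+s. ennreal ((norm (wn i t \<omega> s))\<^sup>2) \<partial>distr M S (Xs k)) \<partial>M)"
      by (rule indep_quad_sum[OF prob ind' _ _ Hs_sub _ Um, where w="\<lambda>k. wn i t"])
         (use I2[OF that] notin wnm[OF that] wn_mean[OF that(1)] distrP[OF I2[OF that]] in auto)
    have "(\<integral>\<^sup>+\<omega>. ennreal ((norm (e i (Suc t) \<omega>))\<^sup>2) \<partial>M)
       = (\<integral>\<^sup>+\<omega>. ennreal ((norm ((1-\<beta>) *\<^sub>R e i t \<omega> + (\<Sum>k\<in>{(i, Suc t, 1)}. wn i t \<omega> (Xs k \<omega>))))\<^sup>2) \<partial>M)"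
      by (rule nn_integral_cong) (simp add: e_rec[OF that])
    also have "\<dots> = (\<integral>\<^sup>+\<omega>. ennreal ((1-\<beta>)\<^sup>2) * ennreal ((norm (e i t \<omega>))\<^sup>2) \<partial>M)
        + (\<integral>\<^sup>+\<omega>. (\<integral>\<^sup>+s. ennreal ((norm (wn i t \<omega> s))\<^sup>2) \<partial>P i) \<partial>M)"
      unfolding q using distrP[OF I2[OF that]]
      by (simp add: power_mult_distrib ennreal_mult abs_mult)
    also have "\<dots> = ennreal ((1-\<beta>)\<^sup>2) * (\<integral>\<^sup>+\<omega>. ennreal ((norm (e i t \<omega>))\<^sup>2) \<partial>M)
        + (\<integral>\<^sup>+\<omega>. (\<integral>\<^sup>+s. ennreal ((norm (wn i t \<omega> s))\<^sup>2) \<partial>P i) \<partial>M)"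
      using measurable_from_subalg[OF gsub em[OF that]] by (subst nn_integral_cmult) auto
    also have "\<dots> \<le> ennreal (1-\<beta>) * (\<integral>\<^sup>+\<omega>. ennreal ((norm (e i t \<omega>))\<^sup>2) \<partial>M)
        + (\<integral>\<^sup>+\<omega>. (\<integral>\<^sup>+s. ennreal ((norm (wn i t \<omega> s))\<^sup>2) \<partial>P i) \<partial>M)"
    proof (intro add_right_mono mult_right_mono ennreal_leI)
      show "(1 - \<beta>)\<^sup>2 \<le> 1 - \<beta>" using beta by (simp add: power2_eq_square mult_left_le_one_le)
    qed auto
    finally show ?thesis .
  qed
  have msq: "(\<lambda>\<omega>. ennreal (\<Sum>i<n. (norm (f i \<omega>))\<^sup>2)) \<in> borel_measurable M"
    if f: "\<And>i. i < n \<Longrightarrow> f i \<in> borel_measurable M" for f :: "nat \<Rightarrow> 'a \<Rightarrow> 'd"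
  proof -
    have "(\<lambda>\<omega>. (norm (f i \<omega>))\<^sup>2) \<in> borel_measurable M" if "i < n" for i
      by (rule borel_measurable_power[OF measurable_compose[OF f[OF that] borel_measurable_norm]])
    then have "(\<lambda>\<omega>. \<Sum>i<n. (norm (f i \<omega>))\<^sup>2) \<in> borel_measurable M"
      by (intro borel_measurable_sum) auto
    then show ?thesis using measurable_compose[OF _ measurable_ennreal] by blast
  qed
  have stk_sq: "(stk_norm n v)\<^sup>2 = (\<Sum>i<n. (norm (v i))\<^sup>2)" for v :: "nat \<Rightarrow> 'd"
    unfolding stk_norm_def by (simp add: sum_nonneg)
  have xM: "x i t \<in> borel_measurable M" if "i < n" "1 \<le> t" for i t
    by (rule measurable_from_subalg[OF gsub xmt[OF that]])
  have xhM: "xh i t \<in> borel_measurable M" if "i < n" "1 \<le> t" for i t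
  proof -
    have "xh i t \<in> borel_measurable (gen M S Xs (Hs t))" using xh_adapted[OF that] unfolding hist_eq .
    then show ?thesis by (rule measurable_from_subalg[OF gsub])
  qed
  have avgM: "(\<lambda>\<omega>. avg n (\<lambda>j. x j t \<omega>)) \<in> borel_measurable M" if "1 \<le> t" for t
    unfolding avg_def using xM that by (intro borel_measurable_scaleR borel_measurable_const borel_measurable_sum) auto
  define D where "D t = (\<integral>\<^sup>+ \<omega>. ennreal ((stk_norm n (\<lambda>i. xh i t \<omega> - x i t \<omega>))\<^sup>2) \<partial>M)" for t
  define Th where "Th t = (\<integral>\<^sup>+ \<omega>. ennreal ((stk_norm n (\<lambda>i. x i t \<omega> - avg n (\<lambda>j. x j t \<omega>)))\<^sup>2) \<partial>M)" for t
  define Dx where "Dx t = (\<integral>\<^sup>+ \<omega>. ennreal (\<Sum>i<n. (norm (x i (Suc t) \<omega> - x i t \<omega>))\<^sup>2) \<partial>M)" for t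
  have dxb: "Dx t \<le> ennreal (3*\<alpha>\<^sup>2) * D t + ennreal 6 * Th t" if t: "1 \<le> t" for t
  proof -
    have "Dx t \<le> (\<integral>\<^sup>+ \<omega>. ennreal (3*\<alpha>\<^sup>2) * ennreal (\<Sum>i<n. (norm (xh i t \<omega> - x i t \<omega>))\<^sup>2)
            + ennreal 6 * ennreal (\<Sum>i<n. (norm (x i t \<omega> - avg n (\<lambda>j. x j t \<omega>)))\<^sup>2) \<partial>M)"
      unfolding Dx_def
    proof (rule nn_integral_mono)
      fix \<omega> assume \<omega>: "\<omega> \<in> space M"
      have "(\<Sum>i<n. (norm (x i (Suc t) \<omega> - x i t \<omega>))\<^sup>2) \<le> 3 * \<alpha>\<^sup>2 * (\<Sum>i<n. (norm (xh i t \<omega> - x i t \<omega>))\<^sup>2)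
            + 6 * (\<Sum>i<n. (norm (x i t \<omega> - avg n (\<lambda>j. x j t \<omega>)))\<^sup>2)"
        by (rule dx_bound[OF W_nonneg W_row W_col]) (use x_upd[OF _ t \<omega>] in auto)
      then have "ennreal (\<Sum>i<n. (norm (x i (Suc t) \<omega> - x i t \<omega>))\<^sup>2) \<le> ennreal (3 * \<alpha>\<^sup>2 * (\<Sum>i<n. (norm (xh i t \<omega> - x i t \<omega>))\<^sup>2)
            + 6 * (\<Sum>i<n. (norm (x i t \<omega> - avg n (\<lambda>j. x j t \<omega>)))\<^sup>2))"
        by (rule ennreal_leI)
      also have "\<dots> = ennreal (3*\<alpha>\<^sup>2) * ennreal (\<Sum>i<n. (norm (xh i t \<omega> - x i t \<omega>))\<^sup>2)
            + ennreal 6 * ennreal (\<Sum>i<n. (norm (x i t \<omega> - avg n (\<lambda>j. x j t \<omega>)))\<^sup>2)"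
        by (simp add: ennreal_plus ennreal_mult sum_nonneg del: ennreal_numeral)
      finally show "ennreal (\<Sum>i<n. (norm (x i (Suc t) \<omega> - x i t \<omega>))\<^sup>2) \<le> ennreal (3*\<alpha>\<^sup>2) * ennreal (\<Sum>i<n. (norm (xh i t \<omega> - x i t \<omega>))\<^sup>2)
            + ennreal 6 * ennreal (\<Sum>i<n. (norm (x i t \<omega> - avg n (\<lambda>j. x j t \<omega>)))\<^sup>2)" .
    qed
    also have "\<dots> = ennreal (3*\<alpha>\<^sup>2) * (\<integral>\<^sup>+ \<omega>. ennreal (\<Sum>i<n. (norm (xh i t \<omega> - x i t \<omega>))\<^sup>2) \<partial>M)
            + ennreal 6 * (\<integral>\<^sup>+ \<omega>. ennreal (\<Sum>i<n. (norm (x i t \<omega> - avg n (\<lambda>j. x j t \<omega>)))\<^sup>2) \<partial>M)"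
    proof -
      have m1: "(\<lambda>\<omega>. ennreal (\<Sum>i<n. (norm (xh i t \<omega> - x i t \<omega>))\<^sup>2)) \<in> borel_measurable M"
        by (rule msq[of "\<lambda>i \<omega>. xh i t \<omega> - x i t \<omega>"]) (use xhM xM t in auto)
      have m2: "(\<lambda>\<omega>. ennreal (\<Sum>i<n. (norm (x i t \<omega> - avg n (\<lambda>j. x j t \<omega>)))\<^sup>2)) \<in> borel_measurable M"
        by (rule msq[of "\<lambda>i \<omega>. x i t \<omega> - avg n (\<lambda>j. x j t \<omega>)"]) (use avgM xM t in auto)
      show ?thesis using m1 m2 by (simp add: nn_integral_add nn_integral_cmult del: ennreal_numeral)
    qed
    also have "\<dots> = ennreal (3*\<alpha>\<^sup>2) * D t + ennreal 6 * Th t"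
      unfolding D_def Th_def stk_sq ..
    finally show ?thesis .
  qed
  have nb: "(\<integral>\<^sup>+\<omega>. (\<integral>\<^sup>+s. ennreal ((norm (c *\<^sub>R wn i t \<omega> s))\<^sup>2) \<partial>P i) \<partial>M)
     \<le> ennreal (c\<^sup>2*(2*\<beta>\<^sup>2*(\<sigma> i)\<^sup>2)) + ennreal (c\<^sup>2*(2*L\<^sup>2)) * (\<integral>\<^sup>+\<omega>. ennreal ((norm (x i (Suc t) \<omega> - x i t \<omega>))\<^sup>2) \<partial>M)"
    if i: "i < n" and t: "1 \<le> t" for i t c
  proof -
    have "(\<integral>\<^sup>+\<omega>. (\<integral>\<^sup>+s. ennreal ((norm (c *\<^sub>R wn i t \<omega> s))\<^sup>2) \<partial>P i) \<partial>M)
       \<le> (\<integral>\<^sup>+\<omega>. ennreal (c\<^sup>2*(2*\<beta>\<^sup>2*(\<sigma> i)\<^sup>2)) + ennreal (c\<^sup>2*(2*L\<^sup>2)) * ennreal ((norm (x i (Suc t) \<omega> - x i t \<omega>))\<^sup>2) \<partial>M)"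
    proof (rule nn_integral_mono)
      fix \<omega>
      have wm: "wn i t \<omega> \<in> borel_measurable (P i)" using wn_mean[OF i, of t \<omega>] by auto
      have "(\<integral>\<^sup>+s. ennreal ((norm (c *\<^sub>R wn i t \<omega> s))\<^sup>2) \<partial>P i) = (\<integral>\<^sup>+s. ennreal (c\<^sup>2) * ennreal ((norm (wn i t \<omega> s))\<^sup>2) \<partial>P i)"
        by (rule nn_integral_cong) (simp add: power_mult_distrib ennreal_mult)
      also have "\<dots> = ennreal (c\<^sup>2) * (\<integral>\<^sup>+s. ennreal ((norm (wn i t \<omega> s))\<^sup>2) \<partial>P i)"
        by (rule nn_integral_cmult) (rule measurable_compose[OF wm nsq_meas])
      also have "\<dots> \<le> ennreal (c\<^sup>2) * (ennreal (2*\<beta>\<^sup>2*(\<sigma> i)\<^sup>2) + ennreal (2*L\<^sup>2*(norm (x i (Suc t) \<omega> - x i t \<omega>))\<^sup>2))"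
        by (rule mult_left_mono[OF wn_bd[OF i]]) simp
      also have "\<dots> = ennreal (c\<^sup>2*(2*\<beta>\<^sup>2*(\<sigma> i)\<^sup>2)) + ennreal (c\<^sup>2*(2*L\<^sup>2)) * ennreal ((norm (x i (Suc t) \<omega> - x i t \<omega>))\<^sup>2)"
        by (simp add: distrib_left ennreal_mult[symmetric] mult.assoc del: ennreal_numeral)
      finally show "(\<integral>\<^sup>+s. ennreal ((norm (c *\<^sub>R wn i t \<omega> s))\<^sup>2) \<partial>P i)
         \<le> ennreal (c\<^sup>2*(2*\<beta>\<^sup>2*(\<sigma> i)\<^sup>2)) + ennreal (c\<^sup>2*(2*L\<^sup>2)) * ennreal ((norm (x i (Suc t) \<omega> - x i t \<omega>))\<^sup>2)" .
    qed
    also have "\<dots> = ennreal (c\<^sup>2*(2*\<beta>\<^sup>2*(\<sigma> i)\<^sup>2)) + ennreal (c\<^sup>2*(2*L\<^sup>2)) * (\<integral>\<^sup>+\<omega>. ennreal ((norm (x i (Suc t) \<omega> - x i t \<omega>))\<^sup>2) \<partial>M)"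
    proof -
      have "(\<lambda>\<omega>. x i (Suc t) \<omega> - x i t \<omega>) \<in> borel_measurable M"
        using xM[OF i t] xM[OF i, of "Suc t"] by (intro borel_measurable_diff) auto
      from measurable_compose[OF this nsq_meas] show ?thesis
        by (simp add: nn_integral_add nn_integral_cmult M.emeasure_space_1 del: ennreal_numeral)
    qed
    finally show ?thesis .
  qed
  have sumnb: "(\<Sum>i<n. \<integral>\<^sup>+\<omega>. (\<integral>\<^sup>+s. ennreal ((norm (c *\<^sub>R wn i t \<omega> s))\<^sup>2) \<partial>P i) \<partial>M)
     \<le> ennreal (c\<^sup>2*(2*\<beta>\<^sup>2*(\<Sum>i<n. (\<sigma> i)\<^sup>2))) + ennreal (c\<^sup>2*(6*L\<^sup>2*\<alpha>\<^sup>2)) * D t + ennreal (c\<^sup>2*(12*L\<^sup>2)) * Th t"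
    if t: "1 \<le> t" for t c
  proof -
    have "(\<Sum>i<n. \<integral>\<^sup>+\<omega>. (\<integral>\<^sup>+s. ennreal ((norm (c *\<^sub>R wn i t \<omega> s))\<^sup>2) \<partial>P i) \<partial>M)
      \<le> (\<Sum>i<n. ennreal (c\<^sup>2*(2*\<beta>\<^sup>2*(\<sigma> i)\<^sup>2)) + ennreal (c\<^sup>2*(2*L\<^sup>2)) * (\<integral>\<^sup>+\<omega>. ennreal ((norm (x i (Suc t) \<omega> - x i t \<omega>))\<^sup>2) \<partial>M))"
      by (intro sum_mono nb t) auto
    also have "\<dots> = ennreal (c\<^sup>2*(2*\<beta>\<^sup>2*(\<Sum>i<n. (\<sigma> i)\<^sup>2))) + ennreal (c\<^sup>2*(2*L\<^sup>2)) * Dx t"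
    proof -
      have "(\<Sum>i<n. ennreal (c\<^sup>2*(2*\<beta>\<^sup>2*(\<sigma> i)\<^sup>2))) = ennreal (c\<^sup>2*(2*\<beta>\<^sup>2*(\<Sum>i<n. (\<sigma> i)\<^sup>2)))"
        by (simp add: sum_distrib_left)
      moreover have "(\<Sum>i<n. \<integral>\<^sup>+\<omega>. ennreal ((norm (x i (Suc t) \<omega> - x i t \<omega>))\<^sup>2) \<partial>M) = Dx t"
      proof -
        have "(\<Sum>i<n. \<integral>\<^sup>+\<omega>. ennreal ((norm (x i (Suc t) \<omega> - x i t \<omega>))\<^sup>2) \<partial>M)
            = (\<integral>\<^sup>+\<omega>. (\<Sum>i<n. ennreal ((norm (x i (Suc t) \<omega> - x i t \<omega>))\<^sup>2)) \<partial>M)"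
        proof (rule nn_integral_sum[symmetric])
          fix i assume "i \<in> {..<n}"
          then have "(\<lambda>\<omega>. x i (Suc t) \<omega> - x i t \<omega>) \<in> borel_measurable M"
            using xM t by (intro borel_measurable_diff) auto
          from measurable_compose[OF this nsq_meas]
          show "(\<lambda>\<omega>. ennreal ((norm (x i (Suc t) \<omega> - x i t \<omega>))\<^sup>2)) \<in> borel_measurable M" .
        qed
        then show ?thesis unfolding Dx_def by simp
      qed
      ultimately show ?thesis by (simp only: sum.distrib sum_distrib_left[symmetric])
    qed
    also have "\<dots> \<le> ennreal (c\<^sup>2*(2*\<beta>\<^sup>2*(\<Sum>i<n. (\<sigma> i)\<^sup>2))) + ennreal (c\<^sup>2*(2*L\<^sup>2)) * (ennreal (3*\<alpha>\<^sup>2) * D t + ennreal 6 * Th t)"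
      by (intro add_left_mono mult_left_mono dxb t) simp
    also have "\<dots> = ennreal (c\<^sup>2*(2*\<beta>\<^sup>2*(\<Sum>i<n. (\<sigma> i)\<^sup>2))) + ennreal (c\<^sup>2*(6*L\<^sup>2*\<alpha>\<^sup>2)) * D t + ennreal (c\<^sup>2*(12*L\<^sup>2)) * Th t"
    proof -
      have "ennreal (c\<^sup>2*(2*L\<^sup>2)) * ennreal (3*\<alpha>\<^sup>2) = ennreal (c\<^sup>2*(6*L\<^sup>2*\<alpha>\<^sup>2))"
        by (simp add: ennreal_mult[symmetric] del: ennreal_numeral)
      moreover have "ennreal (c\<^sup>2*(2*L\<^sup>2)) * ennreal 6 = ennreal (c\<^sup>2*(12*L\<^sup>2))"
        by (simp add: ennreal_mult[symmetric] del: ennreal_numeral)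
      ultimately show ?thesis by (simp add: distrib_left mult.assoc[symmetric] add.assoc del: ennreal_numeral)
    qed
    finally show ?thesis .
  qed
  have eM: "e i t \<in> borel_measurable M" if "i < n" "1 \<le> t" for i t
    by (rule measurable_from_subalg[OF gsub em[OF that]])
  define aU where "aU t = (\<integral>\<^sup>+ \<omega>. ennreal ((stk_norm n (\<lambda>i. z i t \<omega> - Gu i (x i t \<omega>)))\<^sup>2) \<partial>M)" for t
  define aP where "aP t = (\<integral>\<^sup>+ \<omega>. ennreal ((norm (avg n (\<lambda>i. z i t \<omega>) - avg n (\<lambda>i. Gu i (x i t \<omega>))))\<^sup>2) \<partial>M)" for t
  have aU_eq: "aU t = (\<Sum>i<n. \<integral>\<^sup>+\<omega>. ennreal ((norm (e i t \<omega>))\<^sup>2) \<partial>M)" if t: "1 \<le> t" for t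
  proof -
    have "aU t = (\<integral>\<^sup>+ \<omega>. (\<Sum>i<n. ennreal ((norm (e i t \<omega>))\<^sup>2)) \<partial>M)"
      unfolding aU_def stk_sq e_def by simp
    also have "\<dots> = (\<Sum>i<n. \<integral>\<^sup>+\<omega>. ennreal ((norm (e i t \<omega>))\<^sup>2) \<partial>M)"
      by (rule nn_integral_sum) (use measurable_compose[OF eM nsq_meas] t in auto)
    finally show ?thesis .
  qed
  have avg_diff: "avg n (\<lambda>i. z i t \<omega>) - avg n (\<lambda>i. Gu i (x i t \<omega>)) = avg n (\<lambda>i. e i t \<omega>)" for t \<omega>
    unfolding avg_def e_def by (simp add: sum_subtractf scaleR_diff_right)
  have avgeM: "(\<lambda>\<omega>. avg n (\<lambda>i. e i t \<omega>)) \<in> borel_measurable (gen M S Xs (Hs t))" if "1 \<le> t" for t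
    unfolding avg_def using em that by (intro borel_measurable_scaleR borel_measurable_const borel_measurable_sum) auto
  have recU: "aU (Suc t) \<le> ennreal (1-\<beta>) * aU t + (ennreal (2*\<beta>\<^sup>2*(\<Sum>i<n. (\<sigma> i)\<^sup>2)) + ennreal (6*L\<^sup>2*\<alpha>\<^sup>2) * D t + ennreal (12*L\<^sup>2) * Th t)"
    if t: "1 \<le> t" for t
  proof -
    have "aU (Suc t) = (\<Sum>i<n. \<integral>\<^sup>+\<omega>. ennreal ((norm (e i (Suc t) \<omega>))\<^sup>2) \<partial>M)" using aU_eq[of "Suc t"] by simp
    also have "\<dots> \<le> (\<Sum>i<n. ennreal (1-\<beta>) * (\<integral>\<^sup>+\<omega>. ennreal ((norm (e i t \<omega>))\<^sup>2) \<partial>M)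
        + (\<integral>\<^sup>+\<omega>. (\<integral>\<^sup>+s. ennreal ((norm (1 *\<^sub>R wn i t \<omega> s))\<^sup>2) \<partial>P i) \<partial>M))"
      using stepU t by (intro sum_mono) simp
    also have "\<dots> = ennreal (1-\<beta>) * aU t + (\<Sum>i<n. \<integral>\<^sup>+\<omega>. (\<integral>\<^sup>+s. ennreal ((norm (1 *\<^sub>R wn i t \<omega> s))\<^sup>2) \<partial>P i) \<partial>M)"
      by (simp add: sum.distrib sum_distrib_left aU_eq[OF t])
    also have "\<dots> \<le> ennreal (1-\<beta>) * aU t + (ennreal (1\<^sup>2*(2*\<beta>\<^sup>2*(\<Sum>i<n. (\<sigma> i)\<^sup>2))) + ennreal (1\<^sup>2*(6*L\<^sup>2*\<alpha>\<^sup>2)) * D t + ennreal (1\<^sup>2*(12*L\<^sup>2)) * Th t)"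
      by (rule add_left_mono[OF sumnb[OF t]])
    finally show ?thesis by simp
  qed
  have recP: "aP (Suc t) \<le> ennreal (1-\<beta>) * aP t + (ennreal ((1/real n)\<^sup>2*(2*\<beta>\<^sup>2*(\<Sum>i<n. (\<sigma> i)\<^sup>2)))
       + ennreal ((1/real n)\<^sup>2*(6*L\<^sup>2*\<alpha>\<^sup>2)) * D t + ennreal ((1/real n)\<^sup>2*(12*L\<^sup>2)) * Th t)"
    if t: "1 \<le> t" for t
  proof -
    define K :: "(nat \<times> nat \<times> nat) set" where "K = (\<lambda>i. (i, Suc t, 1)) ` {..<n}"
    define w :: "nat \<times> nat \<times> nat \<Rightarrow> 'a \<Rightarrow> 's \<Rightarrow> 'd" where "w k \<omega> s = (1 / real n) *\<^sub>R wn (fst k) t \<omega> s" for k \<omega> s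
    have injK: "inj_on (\<lambda>i. (i, Suc t, 1::nat)) {..<n}" by (auto simp: inj_on_def)
    have Um: "(\<lambda>\<omega>. (1-\<beta>) *\<^sub>R avg n (\<lambda>i. e i t \<omega>)) \<in> borel_measurable (gen M S Xs (Hs t))"
      using avgeM[OF t] by (intro borel_measurable_scaleR borel_measurable_const)
    have wm: "case_prod (w k) \<in> borel_measurable (gen M S Xs (Hs t) \<Otimes>\<^sub>M S)" if "k \<in> K" for k
    proof -
      have "fst k < n" using that by (auto simp: K_def)
      from borel_measurable_scaleR[OF borel_measurable_const wnm[OF this t]]
      have "(\<lambda>p. (1 / real n) *\<^sub>R case_prod (wn (fst k) t) p) \<in> borel_measurable (gen M S Xs (Hs t) \<Otimes>\<^sub>M S)" .
      moreover have "case_prod (w k) = (\<lambda>p. (1 / real n) *\<^sub>R case_prod (wn (fst k) t) p)"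
        by (auto simp: w_def fun_eq_iff)
      ultimately show ?thesis by simp
    qed
    have wi: "integrable (distr M S (Xs k)) (w k \<omega>) \<and> (\<integral>s. w k \<omega> s \<partial>distr M S (Xs k)) = 0"
      if "k \<in> K" for k \<omega>
    proof -
      have k: "fst k < n" "k \<in> I" using that I2[OF _ t] by (auto simp: K_def)
      show ?thesis unfolding distrP[OF k(2)] w_def using wn_mean[OF k(1), of t \<omega>] by simp
    qed
    have q: "(\<integral>\<^sup>+\<omega>. ennreal ((norm ((1-\<beta>) *\<^sub>R avg n (\<lambda>i. e i t \<omega>) + (\<Sum>k\<in>K. w k \<omega> (Xs k \<omega>))))\<^sup>2) \<partial>M)
      = (\<integral>\<^sup>+\<omega>. ennreal ((norm ((1-\<beta>) *\<^sub>R avg n (\<lambda>i. e i t \<omega>)))\<^sup>2) \<partial>M)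
        + (\<Sum>k\<in>K. \<integral>\<^sup>+\<omega>. (\<integral>\<^sup>+s. ennreal ((norm (w k \<omega> s))\<^sup>2) \<partial>distr M S (Xs k)) \<partial>M)"
      by (rule indep_quad_sum[OF prob ind' _ _ Hs_sub _ Um, where w=w])
         (use I2[OF _ t] notin wm wi in \<open>auto simp: K_def\<close>)
    have lhs: "aP (Suc t) = (\<integral>\<^sup>+\<omega>. ennreal ((norm ((1-\<beta>) *\<^sub>R avg n (\<lambda>i. e i t \<omega>) + (\<Sum>k\<in>K. w k \<omega> (Xs k \<omega>))))\<^sup>2) \<partial>M)"
      unfolding aP_def avg_diff
    proof (rule nn_integral_cong)
      fix \<omega> assume \<omega>: "\<omega> \<in> space M"
      have "avg n (\<lambda>i. e i (Suc t) \<omega>) = (1 / real n) *\<^sub>R (\<Sum>i<n. (1-\<beta>) *\<^sub>R e i t \<omega> + wn i t \<omega> (\<xi> i (Suc t) 1 \<omega>))"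
        unfolding avg_def using e_rec[OF _ t \<omega>] by simp
      also have "\<dots> = (1-\<beta>) *\<^sub>R avg n (\<lambda>i. e i t \<omega>) + (\<Sum>i<n. w (i, Suc t, 1) \<omega> (Xs (i, Suc t, 1) \<omega>))"
        unfolding avg_def w_def by (simp add: sum.distrib scaleR_add_right scaleR_sum_right)
      also have "(\<Sum>i<n. w (i, Suc t, 1) \<omega> (Xs (i, Suc t, 1) \<omega>)) = (\<Sum>k\<in>K. w k \<omega> (Xs k \<omega>))"
        unfolding K_def sum.reindex[OF injK] by simp
      finally show "ennreal ((norm (avg n (\<lambda>i. e i (Suc t) \<omega>)))\<^sup>2) = ennreal ((norm ((1-\<beta>) *\<^sub>R avg n (\<lambda>i. e i t \<omega>) + (\<Sum>k\<in>K. w k \<omega> (Xs k \<omega>))))\<^sup>2)"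
        by simp
    qed
    have r1: "(\<integral>\<^sup>+\<omega>. ennreal ((norm ((1-\<beta>) *\<^sub>R avg n (\<lambda>i. e i t \<omega>)))\<^sup>2) \<partial>M) \<le> ennreal (1-\<beta>) * aP t"
    proof -
      have "(\<integral>\<^sup>+\<omega>. ennreal ((norm ((1-\<beta>) *\<^sub>R avg n (\<lambda>i. e i t \<omega>)))\<^sup>2) \<partial>M)
          = (\<integral>\<^sup>+\<omega>. ennreal ((1-\<beta>)\<^sup>2) * ennreal ((norm (avg n (\<lambda>i. e i t \<omega>)))\<^sup>2) \<partial>M)"
        by (rule nn_integral_cong) (simp add: power_mult_distrib ennreal_mult abs_mult)
      also have "\<dots> = ennreal ((1-\<beta>)\<^sup>2) * aP t"
        unfolding aP_def avg_diff
        by (rule nn_integral_cmult) (rule measurable_compose[OF measurable_from_subalg[OF gsub avgeM[OF t]] nsq_meas])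
      also have "\<dots> \<le> ennreal (1-\<beta>) * aP t"
      proof (intro mult_right_mono ennreal_leI)
        show "(1 - \<beta>)\<^sup>2 \<le> 1 - \<beta>" using beta by (simp add: power2_eq_square mult_left_le_one_le)
      qed auto
      finally show ?thesis .
    qed
    have r2: "(\<Sum>k\<in>K. \<integral>\<^sup>+\<omega>. (\<integral>\<^sup>+s. ennreal ((norm (w k \<omega> s))\<^sup>2) \<partial>distr M S (Xs k)) \<partial>M)
        = (\<Sum>i<n. \<integral>\<^sup>+\<omega>. (\<integral>\<^sup>+s. ennreal ((norm ((1 / real n) *\<^sub>R wn i t \<omega> s))\<^sup>2) \<partial>P i) \<partial>M)"
    proof -
      have dP: "distr M S (\<xi> i (Suc t) (Suc 0)) = P i" if "i < n" for i
        using distrP[OF I2[OF that t]] by simp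
      show ?thesis unfolding K_def sum.reindex[OF injK] by (intro sum.cong refl) (simp add: w_def dP)
    qed
    have "aP (Suc t) \<le> ennreal (1-\<beta>) * aP t + (\<Sum>i<n. \<integral>\<^sup>+\<omega>. (\<integral>\<^sup>+s. ennreal ((norm ((1 / real n) *\<^sub>R wn i t \<omega> s))\<^sup>2) \<partial>P i) \<partial>M)"
      unfolding lhs q r2 by (rule add_right_mono[OF r1])
    also have "\<dots> \<le> ennreal (1-\<beta>) * aP t + (ennreal ((1/real n)\<^sup>2*(2*\<beta>\<^sup>2*(\<Sum>i<n. (\<sigma> i)\<^sup>2)))
       + ennreal ((1/real n)\<^sup>2*(6*L\<^sup>2*\<alpha>\<^sup>2)) * D t + ennreal ((1/real n)\<^sup>2*(12*L\<^sup>2)) * Th t)"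
      by (rule add_left_mono[OF sumnb[OF t]])
    finally show ?thesis .
  qed
  have initK: "(\<integral>\<^sup>+\<omega>. ennreal ((norm (\<Sum>k\<in>K. c *\<^sub>R (Gf (fst k) x1 (Xs k \<omega>) - Gu (fst k) x1)))\<^sup>2) \<partial>M)
      \<le> ennreal (\<Sum>k\<in>K. c\<^sup>2 * (\<sigma> (fst k))\<^sup>2)"
    if K: "finite K" "K \<subseteq> Hs 1" and Kn: "\<And>k. k \<in> K \<Longrightarrow> fst k < n" for K c
  proof -
    define w :: "nat \<times> nat \<times> nat \<Rightarrow> 'a \<Rightarrow> 's \<Rightarrow> 'd" where "w k \<omega> s = c *\<^sub>R (Gf (fst k) x1 s - Gu (fst k) x1)" for k \<omega> s
    have KI: "K \<subseteq> I" using K(2) Hs_sub by blast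
    have Um: "(\<lambda>_. 0::'d) \<in> borel_measurable (gen M S Xs {})" by simp
    have wm: "case_prod (w k) \<in> borel_measurable (gen M S Xs {} \<Otimes>\<^sub>M S)" if "k \<in> K" for k
    proof -
      have "(\<lambda>p. Gf (fst k) ((\<lambda>_. x1) (fst p)) (snd p)) \<in> borel_measurable (gen M S Xs {} \<Otimes>\<^sub>M S)"
        by (rule Gfc2[OF Kn[OF that]]) simp
      then have "(\<lambda>p. c *\<^sub>R (Gf (fst k) x1 (snd p) - Gu (fst k) x1)) \<in> borel_measurable (gen M S Xs {} \<Otimes>\<^sub>M S)"
        by (intro borel_measurable_scaleR borel_measurable_diff borel_measurable_const) simp
      moreover have "case_prod (w k) = (\<lambda>p. c *\<^sub>R (Gf (fst k) x1 (snd p) - Gu (fst k) x1))"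
        by (auto simp: w_def fun_eq_iff)
      ultimately show ?thesis by simp
    qed
    have A2': "integrable (P i) (Gf i x1) \<and> (\<integral>s. Gf i x1 s \<partial>P i) = Gu i x1" if "i < n" for i
      using A2[OF that] .
    have wi: "integrable (distr M S (Xs k)) (w k \<omega>) \<and> (\<integral>s. w k \<omega> s \<partial>distr M S (Xs k)) = 0"
      if "k \<in> K" for k \<omega>
    proof -
      interpret Q: prob_space "P (fst k)" by (rule Pprob[OF Kn[OF that]])
      have "k \<in> I" using that KI by blast
      then show ?thesis unfolding distrP[OF \<open>k \<in> I\<close>] w_def
        using A2'[OF Kn[OF that]] by (simp add: Q.prob_space)
    qed
    have q: "(\<integral>\<^sup>+\<omega>. ennreal ((norm ((\<lambda>_. 0::'d) \<omega> + (\<Sum>k\<in>K. w k \<omega> (Xs k \<omega>))))\<^sup>2) \<partial>M)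
      = (\<integral>\<^sup>+\<omega>. ennreal ((norm ((\<lambda>_. 0::'d) \<omega>))\<^sup>2) \<partial>M)
        + (\<Sum>k\<in>K. \<integral>\<^sup>+\<omega>. (\<integral>\<^sup>+s. ennreal ((norm (w k \<omega> s))\<^sup>2) \<partial>distr M S (Xs k)) \<partial>M)"
      by (rule indep_quad_sum[OF prob ind' K(1) KI _ _ Um, where w=w]) (use wm wi in auto)
    have tb: "(\<integral>\<^sup>+\<omega>. (\<integral>\<^sup>+s. ennreal ((norm (w k \<omega> s))\<^sup>2) \<partial>distr M S (Xs k)) \<partial>M) \<le> ennreal (c\<^sup>2 * (\<sigma> (fst k))\<^sup>2)"
      if "k \<in> K" for k
    proof -
      have kI: "k \<in> I" using that KI by blast
      have gm: "Gf (fst k) x1 \<in> borel_measurable (P (fst k))" using A2'[OF Kn[OF that]] by auto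
      have "(\<integral>\<^sup>+s. ennreal ((norm (w k \<omega> s))\<^sup>2) \<partial>distr M S (Xs k))
          = ennreal (c\<^sup>2) * (\<integral>\<^sup>+s. ennreal ((norm (Gf (fst k) x1 s - Gu (fst k) x1))\<^sup>2) \<partial>P (fst k))" for \<omega>
      proof -
        have "(\<integral>\<^sup>+s. ennreal ((norm (w k \<omega> s))\<^sup>2) \<partial>distr M S (Xs k))
           = (\<integral>\<^sup>+s. ennreal (c\<^sup>2) * ennreal ((norm (Gf (fst k) x1 s - Gu (fst k) x1))\<^sup>2) \<partial>P (fst k))"
          unfolding distrP[OF kI] w_def by (rule nn_integral_cong) (simp add: power_mult_distrib ennreal_mult abs_mult)
        also have "\<dots> = ennreal (c\<^sup>2) * (\<integral>\<^sup>+s. ennreal ((norm (Gf (fst k) x1 s - Gu (fst k) x1))\<^sup>2) \<partial>P (fst k))"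
        proof (rule nn_integral_cmult)
          have "(\<lambda>s. Gf (fst k) x1 s - Gu (fst k) x1) \<in> borel_measurable (P (fst k))"
            using gm by (intro borel_measurable_diff borel_measurable_const)
          from measurable_compose[OF this nsq_meas]
          show "(\<lambda>s. ennreal ((norm (Gf (fst k) x1 s - Gu (fst k) x1))\<^sup>2)) \<in> borel_measurable (P (fst k))" .
        qed
        finally show ?thesis .
      qed
      then have "(\<integral>\<^sup>+\<omega>. (\<integral>\<^sup>+s. ennreal ((norm (w k \<omega> s))\<^sup>2) \<partial>distr M S (Xs k)) \<partial>M)
          = ennreal (c\<^sup>2) * (\<integral>\<^sup>+s. ennreal ((norm (Gf (fst k) x1 s - Gu (fst k) x1))\<^sup>2) \<partial>P (fst k))"
        by (simp add: M.emeasure_space_1)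
      also have "\<dots> \<le> ennreal (c\<^sup>2) * ennreal ((\<sigma> (fst k))\<^sup>2)"
        by (rule mult_left_mono[OF A3[OF Kn[OF that]]]) simp
      also have "\<dots> = ennreal (c\<^sup>2 * (\<sigma> (fst k))\<^sup>2)" by (simp add: ennreal_mult)
      finally show ?thesis .
    qed
    have "(\<integral>\<^sup>+\<omega>. ennreal ((norm (\<Sum>k\<in>K. c *\<^sub>R (Gf (fst k) x1 (Xs k \<omega>) - Gu (fst k) x1)))\<^sup>2) \<partial>M)
       = (\<Sum>k\<in>K. \<integral>\<^sup>+\<omega>. (\<integral>\<^sup>+s. ennreal ((norm (w k \<omega> s))\<^sup>2) \<partial>distr M S (Xs k)) \<partial>M)"
      using q by (simp add: w_def)
    also have "\<dots> \<le> (\<Sum>k\<in>K. ennreal (c\<^sup>2 * (\<sigma> (fst k))\<^sup>2))" by (intro sum_mono tb)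
    also have "\<dots> = ennreal (\<Sum>k\<in>K. c\<^sup>2 * (\<sigma> (fst k))\<^sup>2)" by simp
    finally show ?thesis .
  qed
  have b0r: "real b0 \<ge> 1" using b0_pos by simp
  have e1_eq: "e i 1 \<omega> = (\<Sum>r=1..b0. (1 / real b0) *\<^sub>R (Gf i x1 (\<xi> i 1 r \<omega>) - Gu i x1))"
    if i: "i < n" and \<omega>: "\<omega> \<in> space M" for i \<omega>
  proof -
    have "(\<Sum>r=1..b0. (1 / real b0) *\<^sub>R (Gf i x1 (\<xi> i 1 r \<omega>) - Gu i x1))
        = (1 / real b0) *\<^sub>R (\<Sum>r=1..b0. Gf i x1 (\<xi> i 1 r \<omega>)) - Gu i x1"
      using b0_pos by (simp add: scaleR_diff_right sum_subtractf scaleR_sum_right[symmetric] sum_constant_scaleR)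
    then show ?thesis using z_init[OF i \<omega>] x_init[OF i \<omega>] by (simp add: e_def)
  qed
  have initU: "aU 1 \<le> ennreal ((\<Sum>i<n. (\<sigma> i)\<^sup>2) / real b0)"
  proof -
    have bi: "(\<integral>\<^sup>+\<omega>. ennreal ((norm (e i 1 \<omega>))\<^sup>2) \<partial>M) \<le> ennreal ((\<sigma> i)\<^sup>2 / real b0)" if i: "i < n" for i
    proof -
      define Ki :: "(nat \<times> nat \<times> nat) set" where "Ki = (\<lambda>r. (i, 1, r)) ` {1..b0}"
      have inj: "inj_on (\<lambda>r. (i, 1::nat, r)) {1..b0}" by (auto simp: inj_on_def)
      have "(\<integral>\<^sup>+\<omega>. ennreal ((norm (e i 1 \<omega>))\<^sup>2) \<partial>M)
         = (\<integral>\<^sup>+\<omega>. ennreal ((norm (\<Sum>k\<in>Ki. (1 / real b0) *\<^sub>R (Gf (fst k) x1 (Xs k \<omega>) - Gu (fst k) x1)))\<^sup>2) \<partial>M)"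
        unfolding Ki_def sum.reindex[OF inj] by (rule nn_integral_cong) (simp add: e1_eq[OF i, unfolded One_nat_def])
      also have "\<dots> \<le> ennreal (\<Sum>k\<in>Ki. (1 / real b0)\<^sup>2 * (\<sigma> (fst k))\<^sup>2)"
        by (rule initK) (use I1[OF i] i in \<open>auto simp: Ki_def Hs_def\<close>)
      also have "(\<Sum>k\<in>Ki. (1 / real b0)\<^sup>2 * (\<sigma> (fst k))\<^sup>2) = real b0 * ((1 / real b0)\<^sup>2 * (\<sigma> i)\<^sup>2)"
        unfolding Ki_def sum.reindex[OF inj] by simp
      also have "\<dots> = (\<sigma> i)\<^sup>2 / real b0" using b0r by (simp add: power2_eq_square field_simps)
      finally show ?thesis .
    qed
    have "aU 1 = (\<Sum>i<n. \<integral>\<^sup>+\<omega>. ennreal ((norm (e i 1 \<omega>))\<^sup>2) \<partial>M)" by (rule aU_eq) simp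
    also have "\<dots> \<le> (\<Sum>i<n. ennreal ((\<sigma> i)\<^sup>2 / real b0))" by (intro sum_mono bi) simp
    also have "\<dots> = ennreal ((\<Sum>i<n. (\<sigma> i)\<^sup>2) / real b0)" by (simp add: sum_divide_distrib)
    finally show ?thesis .
  qed
  have initP: "aP 1 \<le> ennreal ((\<Sum>i<n. (\<sigma> i)\<^sup>2) / ((real n)\<^sup>2 * real b0))"
  proof -
    define K0 :: "(nat \<times> nat \<times> nat) set" where "K0 = (\<lambda>(i, r). (i, 1, r)) ` ({..<n} \<times> {1..b0})"
    have inj: "inj_on (\<lambda>(i, r). (i, 1::nat, r)) ({..<n} \<times> {1..b0})" by (auto simp: inj_on_def)
    have nr: "real n \<ge> 1" using n_pos by simp
    have "aP 1 = (\<integral>\<^sup>+\<omega>. ennreal ((norm (\<Sum>k\<in>K0. (1 / (real n * real b0)) *\<^sub>R (Gf (fst k) x1 (Xs k \<omega>) - Gu (fst k) x1)))\<^sup>2) \<partial>M)"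
      unfolding aP_def avg_diff
    proof (rule nn_integral_cong)
      fix \<omega> assume \<omega>: "\<omega> \<in> space M"
      have "(\<Sum>k\<in>K0. (1 / (real n * real b0)) *\<^sub>R (Gf (fst k) x1 (Xs k \<omega>) - Gu (fst k) x1))
          = (\<Sum>i<n. \<Sum>r=1..b0. (1 / (real n * real b0)) *\<^sub>R (Gf i x1 (\<xi> i 1 r \<omega>) - Gu i x1))"
        unfolding K0_def sum.reindex[OF inj] by (simp add: sum.cartesian_product split_beta)
      also have "\<dots> = avg n (\<lambda>i. e i 1 \<omega>)"
        unfolding avg_def using e1_eq[OF _ \<omega>, unfolded One_nat_def]
        by (simp add: scaleR_sum_right)
      finally show "ennreal ((norm (avg n (\<lambda>i. e i 1 \<omega>)))\<^sup>2)
         = ennreal ((norm (\<Sum>k\<in>K0. (1 / (real n * real b0)) *\<^sub>R (Gf (fst k) x1 (Xs k \<omega>) - Gu (fst k) x1)))\<^sup>2)"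
        by simp
    qed
    also have "\<dots> \<le> ennreal (\<Sum>k\<in>K0. (1 / (real n * real b0))\<^sup>2 * (\<sigma> (fst k))\<^sup>2)"
      by (rule initK) (use I1 in \<open>auto simp: K0_def Hs_def\<close>)
    also have "(\<Sum>k\<in>K0. (1 / (real n * real b0))\<^sup>2 * (\<sigma> (fst k))\<^sup>2) = (\<Sum>i<n. real b0 * ((1 / (real n * real b0))\<^sup>2 * (\<sigma> i)\<^sup>2))"
    proof -
      have cp: "(\<Sum>x\<in>{..<n} \<times> {1..b0}. g (fst x)) = (\<Sum>i<n. \<Sum>r\<in>{1..b0}. g i)" for g :: "nat \<Rightarrow> real"
      proof -
        have "(\<lambda>x. g (fst x)) = (\<lambda>(i, r::nat). g i)" by auto
        then have "(\<Sum>x\<in>{..<n} \<times> {1..b0}. g (fst x)) = (\<Sum>(i, r)\<in>{..<n} \<times> {1..b0}. g i)" by (rule arg_cong)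
        also have "\<dots> = (\<Sum>i<n. \<Sum>r\<in>{1..b0}. g i)" by (rule sum.cartesian_product[symmetric])
        finally show ?thesis .
      qed
      show ?thesis unfolding K0_def sum.reindex[OF inj]
        using cp[of "\<lambda>i. (1 / (real n * real b0))\<^sup>2 * (\<sigma> i)\<^sup>2"] by (simp add: split_beta)
    qed
    also have "\<dots> = (\<Sum>i<n. (\<sigma> i)\<^sup>2) / ((real n)\<^sup>2 * real b0)"
      using b0r nr by (simp add: sum_divide_distrib power2_eq_square field_simps)
    finally show ?thesis .
  qed
  have T1: "T \<ge> 1" using T by simp
  have nr: "real n > 0" using n_pos by simp
  have sg: "(\<Sum>i<n. (\<sigma> i)\<^sup>2) \<ge> 0" by (simp add: sum_nonneg)
  have P1: "(\<Sum>t=1..T. aP t) \<le> ennreal (((\<Sum>i<n. (\<sigma> i)\<^sup>2) / ((real n)\<^sup>2 * real b0))/\<beta>)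
      + ennreal (((1/real n)\<^sup>2*(2*\<beta>\<^sup>2*(\<Sum>i<n. (\<sigma> i)\<^sup>2))) * real T/\<beta>)
      + ennreal (((1/real n)\<^sup>2*(6*L\<^sup>2*\<alpha>\<^sup>2))/\<beta>) * (\<Sum>t=1..T-1. D t)
      + ennreal (((1/real n)\<^sup>2*(12*L\<^sup>2))/\<beta>) * (\<Sum>t=1..T. Th t)"
  proof (rule rec_sum[where a=aP and d=D and th=Th, OF beta T1 _ initP])
    fix t assume "1 \<le> t" "t < T"
    then show "aP (Suc t) \<le> ennreal (1-\<beta>) * aP t + (ennreal ((1/real n)\<^sup>2*(2*\<beta>\<^sup>2*(\<Sum>i<n. (\<sigma> i)\<^sup>2)))
       + ennreal ((1/real n)\<^sup>2*(6*L\<^sup>2*\<alpha>\<^sup>2)) * D t + ennreal ((1/real n)\<^sup>2*(12*L\<^sup>2)) * Th t)"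
      by (intro recP)
  qed (use sg in simp_all)
  have U1: "(\<Sum>t=1..T. aU t) \<le> ennreal (((\<Sum>i<n. (\<sigma> i)\<^sup>2) / real b0)/\<beta>)
      + ennreal ((2*\<beta>\<^sup>2*(\<Sum>i<n. (\<sigma> i)\<^sup>2)) * real T/\<beta>)
      + ennreal ((6*L\<^sup>2*\<alpha>\<^sup>2)/\<beta>) * (\<Sum>t=1..T-1. D t)
      + ennreal ((12*L\<^sup>2)/\<beta>) * (\<Sum>t=1..T. Th t)"
  proof (rule rec_sum[where a=aU and d=D and th=Th, OF beta T1 _ initU])
    fix t assume "1 \<le> t" "t < T"
    then show "aU (Suc t) \<le> ennreal (1-\<beta>) * aU t + (ennreal (2*\<beta>\<^sup>2*(\<Sum>i<n. (\<sigma> i)\<^sup>2)) + ennreal (6*L\<^sup>2*\<alpha>\<^sup>2) * D t + ennreal (12*L\<^sup>2) * Th t)"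
      by (intro recU)
  qed (use sg in simp_all)
  have r1: "((\<Sum>i<n. (\<sigma> i)\<^sup>2) / ((real n)\<^sup>2 * real b0))/\<beta> = (\<Sum>i<n. (\<sigma> i)\<^sup>2) / ((real n)\<^sup>2 * real b0 * \<beta>)"
    by simp
  have r2: "((1/real n)\<^sup>2*(2*\<beta>\<^sup>2*(\<Sum>i<n. (\<sigma> i)\<^sup>2))) * real T/\<beta> = 2 * \<beta> * (\<Sum>i<n. (\<sigma> i)\<^sup>2) * real T / (real n)\<^sup>2"
    using beta nr by (simp add: field_simps power2_eq_square)
  have r3: "((1/real n)\<^sup>2*(6*L\<^sup>2*\<alpha>\<^sup>2))/\<beta> = 6 * L\<^sup>2 * \<alpha>\<^sup>2 / ((real n)\<^sup>2 * \<beta>)"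
    using beta nr by (simp add: field_simps power2_eq_square)
  have r4: "((1/real n)\<^sup>2*(12*L\<^sup>2))/\<beta> = 12 * L\<^sup>2 / (\<beta> * (real n)\<^sup>2)"
    using beta nr by (simp add: field_simps power2_eq_square)
  have r5: "((\<Sum>i<n. (\<sigma> i)\<^sup>2) / real b0)/\<beta> = (\<Sum>i<n. (\<sigma> i)\<^sup>2) / (real b0 * \<beta>)" by simp
  have r6: "(2*\<beta>\<^sup>2*(\<Sum>i<n. (\<sigma> i)\<^sup>2)) * real T/\<beta> = 2 * \<beta> * (\<Sum>i<n. (\<sigma> i)\<^sup>2) * real T"
    using beta by (simp add: field_simps power2_eq_square)
  show ?thesis
  proof (rule conjI)
    show "(\<Sum>t=1..T. \<integral>\<^sup>+ \<omega>. ennreal ((norm (avg n (\<lambda>i. z i t \<omega>) - avg n (\<lambda>i. Gu i (x i t \<omega>))))\<^sup>2) \<partial>M)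
       \<le> ennreal ((\<Sum>i<n. (\<sigma> i)\<^sup>2) / ((real n)\<^sup>2 * real b0 * \<beta>))
         + ennreal (2 * \<beta> * (\<Sum>i<n. (\<sigma> i)\<^sup>2) * real T / (real n)\<^sup>2)
         + ennreal (6 * L\<^sup>2 * \<alpha>\<^sup>2 / ((real n)\<^sup>2 * \<beta>))
             * (\<Sum>t=1..T-1. \<integral>\<^sup>+ \<omega>. ennreal ((stk_norm n (\<lambda>i. xh i t \<omega> - x i t \<omega>))\<^sup>2) \<partial>M)
         + ennreal (12 * L\<^sup>2 / (\<beta> * (real n)\<^sup>2))
             * (\<Sum>t=1..T. \<integral>\<^sup>+ \<omega>. ennreal ((stk_norm n (\<lambda>i. x i t \<omega> - avg n (\<lambda>j. x j t \<omega>)))\<^sup>2) \<partial>M)"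
      using P1 unfolding r1 r2 r3 r4 aP_def D_def Th_def .
    show "(\<Sum>t=1..T. \<integral>\<^sup>+ \<omega>. ennreal ((stk_norm n (\<lambda>i. z i t \<omega> - Gu i (x i t \<omega>)))\<^sup>2) \<partial>M)
       \<le> ennreal ((\<Sum>i<n. (\<sigma> i)\<^sup>2) / (real b0 * \<beta>))
         + ennreal (2 * \<beta> * (\<Sum>i<n. (\<sigma> i)\<^sup>2) * real T)
         + ennreal (6 * L\<^sup>2 * \<alpha>\<^sup>2 / \<beta>)
             * (\<Sum>t=1..T-1. \<integral>\<^sup>+ \<omega>. ennreal ((stk_norm n (\<lambda>i. xh i t \<omega> - x i t \<omega>))\<^sup>2) \<partial>M)
         + ennreal (12 * L\<^sup>2 / \<beta>)
             * (\<Sum>t=1..T. \<integral>\<^sup>+ \<omega>. ennreal ((stk_norm n (\<lambda>i. x i t \<omega> - avg n (\<lambda>j. x j t \<omega>)))\<^sup>2) \<partial>M)"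
      using U1 unfolding r5 r6 aU_def D_def Th_def .
  qed
qed

end
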